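(* Let $k\in\frac12\mathbb{Z}_{>0}$. The set of monomials \[ \prod_{a=1}^n\phi_a^{p_a}(\phi_a^* )^{d_a}\omega_a^{v_a}\qquad(\text{factors in the order } a=1,\dots,n), \] with $p_a,d_a\in\{0,1\}$ and $v_a\in\{0,1,\dots,2k-1\}$, is a $\mathbb{k}$-basis of $\mathrm{Cl}_q(n,k)$.
   Context: Let $\mathbb{k}$ be a field of characteristic different from $2$, $q\in\mathbb{k}^\times$, $n$ a positive integer and $k\in\frac12\mathbb{Z}_{>0}$ (so $2k$ is a positive integer). Here $\mathrm{Cl}_q(n,k)$ is the unital associative $\mathbb{k}$-algebra generated by $\omega_a,\phi_a,\phi_a^*$ ($a=1,\dots,n$) subject to, for all $a,b$: $\omega_a\omega_b=\omega_b\omega_a$; $\omega_a^{4k}=(1+q^{-2k})\omega_a^{2k}-q^{-2k}$; $\omega_a\phi_b=q^{\delta_{ab}}\phi_b\omega_a$; $\omega_a\phi_b^*=q^{-\delta_{ab}}\phi_b^*\omega_a$; $\phi_a\phi_b+\phi_b\phi_a=0$; $\phi_a^*\phi_b^*+\phi_b^*\phi_a^*=0$; $\phi_a\phi_a^*+\phi_a^*\phi_a=1$; $\phi_a\phi_a^*+q^{-2k}\phi_a^*\phi_a=\omega_a^{2k}$; $\phi_a\phi_b^*+\phi_b^*\phi_a=0$ if $a\neq b$. (For integer $k$ this is a presentation of the algebra with generators $\psi_a,\psi_a^*,\omega_a^{\pm1}$ and relations $\omega_a\psi_b=q^{\delta_{ab}}\psi_b\omega_a$, $\omega_a\psi_b^*=q^{-\delta_{ab}}\psi_b^*\omega_a$,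 $\psi$'s and $\psi^*$'s pairwise anticommuting except $\psi_a\psi_a^*+q^{\pm k}\psi_a^*\psi_a=\omega_a^{\mp k}$, via $\phi_a=\psi_a$, $\phi_a^*=\psi_a^*\omega_a^k$.) *)

theory Defs
  imports Main
begin

text \<open>Generators of the free algebra: Om a = omega_a, Ph a = phi_a, Ps a = phi_a^*.\<close>
datatype gen = Om nat | Ph nat | Ps nat

text \<open>Elements of the free associative algebra over 'k on the generators:
  functions from words to coefficients (we only use finitely supported ones).\<close>
type_synonym 'k fa = "gen list \<Rightarrow> 'k"

definition fin_supp :: "'k::zero fa \<Rightarrow> bool" where
  "fin_supp f \<longleftrightarrow> finite {w. f w \<noteq> 0}"

definition supp :: "'k::zero fa \<Rightarrow> gen list set" where
  "supp f = {w. f w \<noteq> 0}"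

definition fmon :: "gen list \<Rightarrow> 'k::{zero,one} fa" where
  "fmon w = (\<lambda>u. if u = w then 1 else 0)"

definition fadd :: "'k::plus fa \<Rightarrow> 'k fa \<Rightarrow> 'k fa" where
  "fadd f g = (\<lambda>u. f u + g u)"

definition fsub :: "'k::minus fa \<Rightarrow> 'k fa \<Rightarrow> 'k fa" where
  "fsub f g = (\<lambda>u. f u - g u)"

definition fsmult :: "'k::times \<Rightarrow> 'k fa \<Rightarrow> 'k fa" where
  "fsmult c f = (\<lambda>u. c * f u)"

definition fmul :: "'k::comm_semiring_1 fa \<Rightarrow> 'k fa \<Rightarrow> 'k fa" where
  "fmul f g = (\<lambda>w. \<Sum>i\<le>length w. f (take i w) * g (drop i w))"

definition gen_idx :: "gen \<Rightarrow> nat" where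
  "gen_idx g = (case g of Om a \<Rightarrow> a | Ph a \<Rightarrow> a | Ps a \<Rightarrow> a)"

definition valid_word :: "nat \<Rightarrow> gen list \<Rightarrow> bool" where
  "valid_word n w \<longleftrightarrow> (\<forall>g\<in>set w. gen_idx g \<in> {1..n})"

text \<open>Defining relators of Cl_q(n,k), with m = 2k (a positive integer).
  Each relation  L = R  is encoded as the element  L - R.\<close>
definition cl_rels :: "'k::field \<Rightarrow> nat \<Rightarrow> nat \<Rightarrow> 'k fa set" where
  "cl_rels q m n =
    (\<Union>a\<in>{1..n}. \<Union>b\<in>{1..n}.
      { fsub (fmon [Om a, Om b]) (fmon [Om b, Om a]),
        fadd (fsub (fmon (replicate (2*m) (Om a)))
                   (fsmult (1 + (inverse q)^m) (fmon (replicate m (Om a)))))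
             (fsmult ((inverse q)^m) (fmon [])),
        fsub (fmon [Om a, Ph b]) (fsmult (if a = b then q else 1) (fmon [Ph b, Om a])),
        fsub (fmon [Om a, Ps b]) (fsmult (if a = b then inverse q else 1) (fmon [Ps b, Om a])),
        fadd (fmon [Ph a, Ph b]) (fmon [Ph b, Ph a]),
        fadd (fmon [Ps a, Ps b]) (fmon [Ps b, Ps a]),
        fsub (fadd (fmon [Ph a, Ps a]) (fmon [Ps a, Ph a])) (fmon []),
        fsub (fadd (fmon [Ph a, Ps a]) (fsmult ((inverse q)^m) (fmon [Ps a, Ph a])))
             (fmon (replicate m (Om a))) }
      \<union> (if a \<noteq> b then {fadd (fmon [Ph a, Ps b]) (fmon [Ps b, Ph a])} else {}))"

inductive_set cl_ideal :: "'k::field \<Rightarrow> nat \<Rightarrow> nat \<Rightarrow> 'k fa set"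
  for q :: "'k::field" and m n :: nat where
  rel: "r \<in> cl_rels q m n \<Longrightarrow> r \<in> cl_ideal q m n"
| zero: "(\<lambda>_. 0) \<in> cl_ideal q m n"
| add: "x \<in> cl_ideal q m n \<Longrightarrow> y \<in> cl_ideal q m n \<Longrightarrow> fadd x y \<in> cl_ideal q m n"
| smult: "x \<in> cl_ideal q m n \<Longrightarrow> fsmult c x \<in> cl_ideal q m n"
| lmul: "x \<in> cl_ideal q m n \<Longrightarrow> valid_word n u \<Longrightarrow> fmul (fmon u) x \<in> cl_ideal q m n"
| rmul: "x \<in> cl_ideal q m n \<Longrightarrow> valid_word n u \<Longrightarrow> fmul x (fmon u) \<in> cl_ideal q m n"

definition ord_word :: "nat \<Rightarrow> (nat \<Rightarrow> nat) \<Rightarrow> (nat \<Rightarrow> nat) \<Rightarrow> (nat \<Rightarrow> nat) \<Rightarrow> gen list" where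
  "ord_word n p d v =
     concat (map (\<lambda>a. replicate (p a) (Ph a) @ replicate (d a) (Ps a) @ replicate (v a) (Om a))
                 [1..<n+1])"

definition cl_basis_words :: "nat \<Rightarrow> nat \<Rightarrow> gen list set" where
  "cl_basis_words m n =
     {ord_word n p d v | p d v. \<forall>a\<in>{1..n}. p a \<le> 1 \<and> d a \<le> 1 \<and> v a < m}"

end

theory Submission
  imports Defs "HOL-Library.Function_Algebras"
begin

lemma fadd_eq[simp]: "fadd f g = f + g" by (simp add: fadd_def fun_eq_iff)
lemma fsub_eq[simp]: "fsub f g = f - g" by (simp add: fsub_def fun_eq_iff)

definition lm :: "gen list \<Rightarrow> 'k::comm_semiring_1 fa \<Rightarrow> 'k fa" where
  "lm u x = (\<lambda>w. if take (length u) w = u then x (drop (length u) w) else 0)"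

definition rm :: "'k::comm_semiring_1 fa \<Rightarrow> gen list \<Rightarrow> 'k fa" where
  "rm x u = (\<lambda>w. if length u \<le> length w \<and> drop (length w - length u) w = u
                  then x (take (length w - length u) w) else 0)"

lemma fmul_fmon_left: "fmul (fmon u) x = lm u x"
proof (rule ext)
  fix w :: "gen list"
  have "fmul (fmon u) x w = (\<Sum>i\<le>length w. if i = length u then
            (if take (length u) w = u then x (drop (length u) w) else 0) else 0)"
    unfolding fmul_def
    by (rule sum.cong) (auto simp: fmon_def dest: arg_cong[of _ _ length])
  also have "\<dots> = lm u x w"
    by (auto simp: lm_def dest: arg_cong[of _ _ length])
  finally show "fmul (fmon u) x w = lm u x w" .
qed

lemma fmul_fmon_right: "fmul x (fmon u) = rm x u"
proof (rule ext)
  fix w :: "gen list"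
  have "fmul x (fmon u) w = (\<Sum>i\<le>length w. if i = length w - length u then
            (if length u \<le> length w \<and> drop (length w - length u) w = u
              then x (take (length w - length u) w) else 0) else 0)"
    unfolding fmul_def
    by (rule sum.cong) (auto simp: fmon_def dest: arg_cong[of _ _ length])
  also have "\<dots> = rm x u w"
    by (auto simp: rm_def)
  finally show "fmul x (fmon u) w = rm x u w" .
qed

definition ctx :: "gen list \<Rightarrow> gen list \<Rightarrow> 'k::comm_semiring_1 fa \<Rightarrow> 'k fa" where
  "ctx u v x = lm u (rm x v)"

lemma ctx_add[simp]: "ctx u v (x + y) = ctx u v x + ctx u v y"
  by (auto simp: ctx_def lm_def rm_def fun_eq_iff)
lemma ctx_diff[simp]: "ctx u v ((x::'k::comm_ring_1 fa) - y) = ctx u v x - ctx u v y"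
  by (auto simp: ctx_def lm_def rm_def fun_eq_iff)
lemma ctx_zero[simp]: "ctx u v 0 = 0"
  by (auto simp: ctx_def lm_def rm_def fun_eq_iff)
lemma ctx_smult[simp]: "ctx u v (fsmult c x) = fsmult c (ctx u v x)"
  by (auto simp: ctx_def lm_def rm_def fun_eq_iff fsmult_def)
lemma ctx_fmon[simp]: "ctx u v (fmon w) = fmon (u @ w @ v)"
proof -
  have "ctx u v (fmon w) z = fmon (u @ w @ v) z" for z
  proof (cases "z = u @ w @ v")
    case True then show ?thesis by (simp add: ctx_def lm_def rm_def fmon_def)
  next
    case False
    { assume a: "take (length u) z = u" "length v \<le> length (drop (length u) z)"
         "drop (length (drop (length u) z) - length v) (drop (length u) z) = v"
         "take (length (drop (length u) z) - length v) (drop (length u) z) = w"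
      have "z = take (length u) z @ drop (length u) z" by simp
      also have "drop (length u) z = take (length (drop (length u) z) - length v) (drop (length u) z)
          @ drop (length (drop (length u) z) - length v) (drop (length u) z)"
        by (rule append_take_drop_id[symmetric])
      finally have "z = u @ w @ v" using a by simp
      with False have False by simp }
    then show ?thesis using False by (auto simp: ctx_def lm_def rm_def fmon_def)
  qed
  then show ?thesis by auto
qed
lemma ctx_app[simp]: "ctx u v g (u @ w @ v) = g w"
  by (simp add: ctx_def lm_def rm_def)

lemma ctx_out: assumes "\<not> (\<exists>w. z = u @ w @ v)" shows "ctx u v g z = 0"
proof -
  { assume a: "take (length u) z = u" "length v \<le> length (drop (length u) z)"
         "drop (length (drop (length u) z) - length v) (drop (length u) z) = v"
    have "z = take (length u) z @ drop (length u) z" by simp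
    also have "drop (length u) z = take (length (drop (length u) z) - length v) (drop (length u) z)
          @ drop (length (drop (length u) z) - length v) (drop (length u) z)"
      by (rule append_take_drop_id[symmetric])
    finally have "z = u @ take (length (drop (length u) z) - length v) (drop (length u) z) @ v"
      using a by simp
    with assms have False by blast }
  then show ?thesis by (auto simp: ctx_def lm_def rm_def)
qed

lemma supp_ctx: "supp (ctx u v g) = (\<lambda>w. u @ w @ v) ` supp g"
proof
  show "supp (ctx u v g) \<subseteq> (\<lambda>w. u @ w @ v) ` supp g"
  proof
    fix z assume "z \<in> supp (ctx u v g)"
    then have nz: "ctx u v g z \<noteq> 0" by (simp add: supp_def)
    then obtain w where z: "z = u @ w @ v" using ctx_out by blast
    with nz show "z \<in> (\<lambda>w. u @ w @ v) ` supp g" by (auto simp: supp_def)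
  qed
  show "(\<lambda>w. u @ w @ v) ` supp g \<subseteq> supp (ctx u v g)"
    by (auto simp: supp_def)
qed

lemma fin_supp_ctx: "fin_supp g \<Longrightarrow> fin_supp (ctx u v g)"
  using supp_ctx[of u v g] by (simp add: fin_supp_def supp_def[symmetric])


lemma valid_app[simp]: "valid_word n (u @ w) \<longleftrightarrow> valid_word n u \<and> valid_word n w"
  by (auto simp: valid_word_def)
lemma valid_Cons[simp]: "valid_word n (g # w) \<longleftrightarrow> gen_idx g \<in> {1..n} \<and> valid_word n w"
  by (auto simp: valid_word_def)
lemma valid_Nil[simp]: "valid_word n []"
  by (auto simp: valid_word_def)
lemma valid_rep[simp]: "valid_word n (replicate k g) \<longleftrightarrow> k = 0 \<or> gen_idx g \<in> {1..n}"
  by (auto simp: valid_word_def)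
lemma gen_idx_simps[simp]: "gen_idx (Om a) = a" "gen_idx (Ph a) = a" "gen_idx (Ps a) = a"
  by (auto simp: gen_idx_def)

lemma fsmult_one[simp]: "fsmult 1 x = (x::'k::comm_ring_1 fa)" by (simp add: fsmult_def)
lemma fsmult_zero[simp]: "fsmult 0 x = (0::'k::comm_ring_1 fa)" by (simp add: fsmult_def fun_eq_iff)
lemma fsmult_zero2[simp]: "fsmult c 0 = (0::'k::comm_ring_1 fa)" by (simp add: fsmult_def fun_eq_iff)
lemma fsmult_fsmult[simp]: "fsmult c (fsmult d x) = fsmult (c * d) (x::'k::comm_ring_1 fa)"
  by (simp add: fsmult_def fun_eq_iff)
lemma fsmult_add: "fsmult c (x + y) = fsmult c x + fsmult c (y::'k::comm_ring_1 fa)"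
  by (simp add: fsmult_def fun_eq_iff algebra_simps)
lemma fsmult_diff: "fsmult c (x - y) = fsmult c x - fsmult c (y::'k::comm_ring_1 fa)"
  by (simp add: fsmult_def fun_eq_iff algebra_simps)
lemma fsmult_minus1: "fsmult (-1) x = - (x::'k::comm_ring_1 fa)"
  by (simp add: fsmult_def fun_eq_iff)

definition sw :: "nat \<Rightarrow> nat \<Rightarrow> nat \<Rightarrow> nat \<Rightarrow> gen list" where
  "sw c p d v = replicate p (Ph c) @ replicate d (Ps c) @ replicate v (Om c)"

lemma valid_sw[simp]: "c \<in> {1..n} \<Longrightarrow> valid_word n (sw c p d v)"
  by (simp add: sw_def)

context
  fixes q :: "'k::field" and m n :: nat
begin

abbreviation "II \<equiv> cl_ideal q m n"

lemma I_zero[simp]: "0 \<in> II"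
  using cl_ideal.zero[of q m n] by (simp add: zero_fun_def)
lemma I_add: "x \<in> II \<Longrightarrow> y \<in> II \<Longrightarrow> x + y \<in> II"
proof -
  assume "x \<in> II" "y \<in> II"
  then have "fadd x y \<in> II" by (rule cl_ideal.add)
  then show ?thesis by simp
qed
lemma I_smult: "x \<in> II \<Longrightarrow> fsmult c x \<in> II"
  by (rule cl_ideal.smult)
lemma I_neg: "x \<in> II \<Longrightarrow> - x \<in> II"
  by (metis I_smult fsmult_minus1)
lemma I_diff: "x \<in> II \<Longrightarrow> y \<in> II \<Longrightarrow> x - y \<in> II"
  by (metis I_add I_neg diff_conv_add_uminus)
lemma I_ctx: "x \<in> II \<Longrightarrow> valid_word n u \<Longrightarrow> valid_word n v \<Longrightarrow> ctx u v x \<in> II"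
  unfolding ctx_def fmul_fmon_left[symmetric] fmul_fmon_right[symmetric]
  by (intro cl_ideal.lmul cl_ideal.rmul)

definition cg :: "'k fa \<Rightarrow> 'k fa \<Rightarrow> bool" where
  "cg x y \<longleftrightarrow> x - y \<in> II"

lemma cg_refl[simp]: "cg x x" by (simp add: cg_def)
lemma cg_sym: "cg x y \<Longrightarrow> cg y x"
  unfolding cg_def by (metis I_neg minus_diff_eq)
lemma cg_trans: "cg x y \<Longrightarrow> cg y z \<Longrightarrow> cg x z"
proof -
  assume "cg x y" "cg y z"
  then have "(x - y) + (y - z) \<in> II" unfolding cg_def by (rule I_add)
  moreover have "(x - y) + (y - z) = x - z" by simp
  ultimately show ?thesis unfolding cg_def by simp
qed
lemma cg_add: "cg x x' \<Longrightarrow> cg y y' \<Longrightarrow> cg (x + y) (x' + y')"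
proof -
  assume "cg x x'" "cg y y'"
  then have "(x - x') + (y - y') \<in> II" unfolding cg_def by (rule I_add)
  moreover have "(x - x') + (y - y') = (x + y) - (x' + y')" by simp
  ultimately show ?thesis unfolding cg_def by simp
qed
lemma cg_diff: "cg x x' \<Longrightarrow> cg y y' \<Longrightarrow> cg (x - y) (x' - y')"
proof -
  assume "cg x x'" "cg y y'"
  then have "(x - x') - (y - y') \<in> II" unfolding cg_def by (rule I_diff)
  moreover have "(x - x') - (y - y') = (x - y) - (x' - y')" by simp
  ultimately show ?thesis unfolding cg_def by simp
qed
lemma cg_smult: "cg x x' \<Longrightarrow> cg (fsmult c x) (fsmult c x')"
  unfolding cg_def by (metis I_smult fsmult_diff)
lemma cg_ctx: "cg x x' \<Longrightarrow> valid_word n u \<Longrightarrow> valid_word n v \<Longrightarrow> cg (ctx u v x) (ctx u v x')"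
  unfolding cg_def by (metis I_ctx ctx_diff)
lemma cg_neg: "cg x x' \<Longrightarrow> cg (- x) (- x')"
proof -
  assume "cg x x'"
  then have "- (x - x') \<in> II" unfolding cg_def by (rule I_neg)
  moreover have "- (x - x') = (- x) - (- x')" by simp
  ultimately show ?thesis unfolding cg_def by simp
qed
lemma cg_I: "cg x y \<Longrightarrow> y \<in> II \<Longrightarrow> x \<in> II"
  unfolding cg_def by (metis I_add diff_add_cancel)

lemma rel_in: "r \<in> cl_rels q m n \<Longrightarrow> r \<in> II" by (rule cl_ideal.rel)

lemma rels_I:
  assumes "a \<in> {1..n}" "b \<in> {1..n}"
    "r \<in> { fsub (fmon [Om a, Om b]) (fmon [Om b, Om a]),
        fadd (fsub (fmon (replicate (2*m) (Om a)))
                   (fsmult (1 + (inverse q)^m) (fmon (replicate m (Om a)))))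
             (fsmult ((inverse q)^m) (fmon [])),
        fsub (fmon [Om a, Ph b]) (fsmult (if a = b then q else 1) (fmon [Ph b, Om a])),
        fsub (fmon [Om a, Ps b]) (fsmult (if a = b then inverse q else 1) (fmon [Ps b, Om a])),
        fadd (fmon [Ph a, Ph b]) (fmon [Ph b, Ph a]),
        fadd (fmon [Ps a, Ps b]) (fmon [Ps b, Ps a]),
        fsub (fadd (fmon [Ph a, Ps a]) (fmon [Ps a, Ph a])) (fmon []),
        fsub (fadd (fmon [Ph a, Ps a]) (fsmult ((inverse q)^m) (fmon [Ps a, Ph a])))
             (fmon (replicate m (Om a))) }
      \<union> (if a \<noteq> b then {fadd (fmon [Ph a, Ps b]) (fmon [Ps b, Ph a])} else {})"
  shows "r \<in> II"
  apply (rule rel_in)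
  unfolding cl_rels_def
  apply (rule UN_I[of a], fact)
  apply (rule UN_I[of b], fact)
  apply (rule assms(3))
  done

lemma r_OmOm: assumes "a \<in> {1..n}" "b \<in> {1..n}"
  shows "cg (fmon [Om a, Om b]) (fmon [Om b, Om a])"
proof -
  have "fsub (fmon [Om a, Om b]) (fmon [Om b, Om a]) \<in> II" by (rule rels_I[OF assms]) blast
  then show ?thesis by (simp add: cg_def)
qed
lemma r_OmPh: assumes "a \<in> {1..n}" "b \<in> {1..n}"
  shows "cg (fmon [Om a, Ph b]) (fsmult (if a = b then q else 1) (fmon [Ph b, Om a]))"
proof -
  have "fsub (fmon [Om a, Ph b]) (fsmult (if a = b then q else 1) (fmon [Ph b, Om a])) \<in> II"
    by (rule rels_I[OF assms]) blast
  then show ?thesis by (simp add: cg_def)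
qed
lemma r_OmPs: assumes "a \<in> {1..n}" "b \<in> {1..n}"
  shows "cg (fmon [Om a, Ps b]) (fsmult (if a = b then inverse q else 1) (fmon [Ps b, Om a]))"
proof -
  have "fsub (fmon [Om a, Ps b]) (fsmult (if a = b then inverse q else 1) (fmon [Ps b, Om a])) \<in> II"
    by (rule rels_I[OF assms]) blast
  then show ?thesis by (simp add: cg_def)
qed
lemma r_PhPh: assumes "a \<in> {1..n}" "b \<in> {1..n}"
  shows "cg (fmon [Ph a, Ph b]) (- fmon [Ph b, Ph a])"
proof -
  have "fadd (fmon [Ph a, Ph b]) (fmon [Ph b, Ph a]) \<in> II"
    by (rule rels_I[OF assms]) blast
  then show ?thesis by (simp add: cg_def)
qed
lemma r_PsPs: assumes "a \<in> {1..n}" "b \<in> {1..n}"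
  shows "cg (fmon [Ps a, Ps b]) (- fmon [Ps b, Ps a])"
proof -
  have "fadd (fmon [Ps a, Ps b]) (fmon [Ps b, Ps a]) \<in> II"
    by (rule rels_I[OF assms]) blast
  then show ?thesis by (simp add: cg_def)
qed
lemma r_PhPs: assumes "a \<in> {1..n}" "b \<in> {1..n}" "a \<noteq> b"
  shows "cg (fmon [Ph a, Ps b]) (- fmon [Ps b, Ph a])"
proof -
  have "fadd (fmon [Ph a, Ps b]) (fmon [Ps b, Ph a]) \<in> II"
    by (rule rels_I[OF assms(1,2)]) (use assms(3) in simp)
  then show ?thesis by (simp add: cg_def)
qed
lemma r_PsPh: assumes "a \<in> {1..n}" "b \<in> {1..n}" "a \<noteq> b"
  shows "cg (fmon [Ps b, Ph a]) (- fmon [Ph a, Ps b])"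
proof -
  have "fadd (fmon [Ph a, Ps b]) (fmon [Ps b, Ph a]) \<in> II"
    by (rule rels_I[OF assms(1,2)]) (use assms(3) in simp)
  then have "fmon [Ps b, Ph a] - (- fmon [Ph a, Ps b]) \<in> II" by (simp add: add.commute)
  then show ?thesis by (simp add: cg_def)
qed
lemma r_PsPh1: assumes "a \<in> {1..n}"
  shows "cg (fmon [Ps a, Ph a]) (fmon [] - fmon [Ph a, Ps a])"
proof -
  have mem: "fsub (fadd (fmon [Ph a, Ps a]) (fmon [Ps a, Ph a])) (fmon []) \<in> II"
    by (rule rels_I[OF assms assms]) blast
  have eq: "fsub (fadd (fmon [Ph a, Ps a]) (fmon [Ps a, Ph a])) (fmon [])
     = fmon [Ps a, Ph a] - (fmon [] - (fmon [Ph a, Ps a] :: 'k fa))" by (simp add: fun_eq_iff algebra_simps)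
  show ?thesis unfolding cg_def eq[symmetric] by (rule mem)
qed
lemma r_Omm: assumes "a \<in> {1..n}"
  shows "cg (fmon (replicate m (Om a))) (fmon [Ph a, Ps a] + fsmult ((inverse q)^m) (fmon [Ps a, Ph a]))"
proof -
  have "fsub (fadd (fmon [Ph a, Ps a]) (fsmult ((inverse q)^m) (fmon [Ps a, Ph a])))
             (fmon (replicate m (Om a))) \<in> II"
    by (rule rels_I[OF assms assms]) blast
  then have "cg (fmon [Ph a, Ps a] + fsmult ((inverse q)^m) (fmon [Ps a, Ph a])) (fmon (replicate m (Om a)))"
    by (simp add: cg_def)
  then show ?thesis by (rule cg_sym)
qed

definition gdS :: "gen list set \<Rightarrow> 'k fa \<Rightarrow> bool" where
  "gdS T x \<longleftrightarrow> (\<exists>g. fin_supp g \<and> supp g \<subseteq> T \<and> cg x g)"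

lemma gdS_zero[simp]: "gdS T 0"
  unfolding gdS_def by (rule exI[of _ 0]) (simp add: fin_supp_def supp_def)

lemma gdS_fmon: "w \<in> T \<Longrightarrow> gdS T (fmon w)"
  unfolding gdS_def by (rule exI[of _ "fmon w"]) (auto simp: fin_supp_def supp_def fmon_def)

lemma gdS_add: "gdS T x \<Longrightarrow> gdS T y \<Longrightarrow> gdS T (x + y)"
proof -
  assume "gdS T x" "gdS T y"
  then obtain g h where g: "fin_supp g" "supp g \<subseteq> T" "cg x g"
    and h: "fin_supp h" "supp h \<subseteq> T" "cg y h" unfolding gdS_def by blast
  have s: "supp (g + h) \<subseteq> supp g \<union> supp h" by (auto simp: supp_def)
  have "fin_supp (g + h)" using g(1) h(1) s unfolding fin_supp_def supp_def[symmetric]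
    by (meson finite_Un finite_subset)
  moreover have "supp (g + h) \<subseteq> T" using s g h by blast
  moreover have "cg (x + y) (g + h)" using g h by (intro cg_add)
  ultimately show ?thesis unfolding gdS_def by blast
qed

lemma gdS_smult: "gdS T x \<Longrightarrow> gdS T (fsmult c x)"
proof -
  assume "gdS T x"
  then obtain g where g: "fin_supp g" "supp g \<subseteq> T" "cg x g" unfolding gdS_def by blast
  have s: "supp (fsmult c g) \<subseteq> supp g" by (auto simp: supp_def fsmult_def)
  have "fin_supp (fsmult c g)" using g(1) s unfolding fin_supp_def supp_def[symmetric]
    by (meson finite_subset)
  moreover have "supp (fsmult c g) \<subseteq> T" using s g by blast
  moreover have "cg (fsmult c x) (fsmult c g)" using g by (intro cg_smult)
  ultimately show ?thesis unfolding gdS_def by blast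
qed

lemma gdS_neg: "gdS T x \<Longrightarrow> gdS T (- x)"
  by (metis gdS_smult fsmult_minus1)

lemma gdS_diff: "gdS T x \<Longrightarrow> gdS T y \<Longrightarrow> gdS T (x - y)"
  by (metis gdS_add gdS_neg diff_conv_add_uminus)

lemma gdS_cg: "cg x y \<Longrightarrow> gdS T y \<Longrightarrow> gdS T x"
  unfolding gdS_def by (meson cg_trans)

lemma gdS_sum: "finite A \<Longrightarrow> (\<forall>a\<in>A. gdS T (h a)) \<Longrightarrow> gdS T (sum h A)"
  by (induction A rule: finite_induct) (auto intro: gdS_add)

lemma gdS_ctx:
  assumes "gdS L x" "valid_word n u" "valid_word n v" "\<forall>w\<in>L. u @ w @ v \<in> T"
  shows "gdS T (ctx u v x)"
proof -
  obtain g where g: "fin_supp g" "supp g \<subseteq> L" "cg x g" using assms(1) unfolding gdS_def by blast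
  have "fin_supp (ctx u v g)" using g(1) by (rule fin_supp_ctx)
  moreover have "supp (ctx u v g) \<subseteq> T" using g(2) assms(4) by (auto simp: supp_ctx)
  moreover have "cg (ctx u v x) (ctx u v g)" using g(3) assms(2,3) by (rule cg_ctx)
  ultimately show ?thesis unfolding gdS_def by blast
qed

lemma swap_pair:
  assumes "gen_idx x \<in> {1..n}" "gen_idx y \<in> {1..n}" "gen_idx x \<noteq> gen_idx y"
  shows "\<exists>e. cg (fmon [x, y]) (fsmult e (fmon [y, x]))"
proof (cases x)
  case (Om a)
  show ?thesis
  proof (cases y)
    case (Om b) then show ?thesis using r_OmOm[of a b] assms \<open>x = Om a\<close> by (intro exI[of _ 1]) simp
  next
    case (Ph b) then show ?thesis using r_OmPh[of a b] assms \<open>x = Om a\<close> by (intro exI[of _ 1]) simp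
  next
    case (Ps b) then show ?thesis using r_OmPs[of a b] assms \<open>x = Om a\<close> by (intro exI[of _ 1]) simp
  qed
next
  case (Ph a)
  show ?thesis
  proof (cases y)
    case (Om b) then show ?thesis using r_OmPh[of b a] assms \<open>x = Ph a\<close> by (intro exI[of _ 1]) (simp add: cg_sym)
  next
    case (Ph b) then show ?thesis using r_PhPh[of a b] assms \<open>x = Ph a\<close> by (intro exI[of _ "-1"]) (simp add: fsmult_minus1)
  next
    case (Ps b) then show ?thesis using r_PhPs[of a b] assms \<open>x = Ph a\<close> by (intro exI[of _ "-1"]) (simp add: fsmult_minus1)
  qed
next
  case (Ps a)
  show ?thesis
  proof (cases y)
    case (Om b) then show ?thesis using r_OmPs[of b a] assms \<open>x = Ps a\<close> by (intro exI[of _ 1]) (simp add: cg_sym)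
  next
    case (Ph b) then show ?thesis using r_PsPh[of b a] assms \<open>x = Ps a\<close> by (intro exI[of _ "-1"]) (simp add: fsmult_minus1)
  next
    case (Ps b) then show ?thesis using r_PsPs[of a b] assms \<open>x = Ps a\<close> by (intro exI[of _ "-1"]) (simp add: fsmult_minus1)
  qed
qed

lemma move_past:
  assumes "gen_idx g \<in> {1..n}" "valid_word n A" "valid_word n W"
    "\<forall>x\<in>set A. gen_idx x \<noteq> gen_idx g"
  shows "valid_word n u \<Longrightarrow> \<exists>e. cg (fmon (u @ g # A @ W)) (fsmult e (fmon (u @ A @ g # W)))"
  using assms(2,4)
proof (induction A arbitrary: u)
  case Nil
  then show ?case by (intro exI[of _ 1]) simp
next
  case (Cons x A)
  obtain e1 where e1: "cg (fmon [g, x]) (fsmult e1 (fmon [x, g]))"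
    using swap_pair[of g x] assms(1) Cons.prems by auto
  have "cg (ctx u (A @ W) (fmon [g, x])) (ctx u (A @ W) (fsmult e1 (fmon [x, g])))"
    using e1 Cons.prems assms(3) by (intro cg_ctx) auto
  then have c1: "cg (fmon (u @ g # x # A @ W)) (fsmult e1 (fmon ((u @ [x]) @ g # A @ W)))"
    by simp
  obtain e2 where e2: "cg (fmon ((u @ [x]) @ g # A @ W)) (fsmult e2 (fmon ((u @ [x]) @ A @ g # W)))"
    using Cons.IH[of "u @ [x]"] Cons.prems by auto
  have "cg (fmon (u @ g # (x # A) @ W)) (fsmult (e1 * e2) (fmon (u @ (x # A) @ g # W)))"
    using cg_trans[OF c1 cg_smult[OF e2, of e1]] by simp
  then show ?case by blast
qed

lemma sum_fun_apply: "(sum h A) w = (\<Sum>a\<in>A. h a w)"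
  by (induction A rule: infinite_finite_induct) auto

lemma fa_decomp: "fin_supp (g::'k fa) \<Longrightarrow> g = (\<Sum>b\<in>supp g. fsmult (g b) (fmon b))"
proof (rule ext)
  fix w
  assume "fin_supp g"
  then have fin: "finite (supp g)" by (simp add: fin_supp_def supp_def)
  have "(\<Sum>b\<in>supp g. fsmult (g b) (fmon b)) w = (\<Sum>b\<in>supp g. if b = w then g w else 0)"
    unfolding sum_fun_apply by (rule sum.cong) (auto simp: fsmult_def fmon_def)
  also have "\<dots> = g w" using fin by (simp add: supp_def)
  finally show "g w = (\<Sum>b\<in>supp g. fsmult (g b) (fmon b)) w" by simp
qed

lemma ctx_sum: "ctx u v (sum h A) = (\<Sum>a\<in>A. ctx u v (h a))"
proof (induction A rule: infinite_finite_induct)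
  case (infinite A) then show ?case by (metis sum.infinite ctx_zero)
next
  case empty then show ?case by (metis sum.empty ctx_zero)
next
  case (insert x F)
  have "ctx u v (sum h (insert x F)) = ctx u v (h x + sum h F)" using insert.hyps by (metis sum.insert)
  also have "\<dots> = ctx u v (h x) + (\<Sum>a\<in>F. ctx u v (h a))" by (metis ctx_add insert.IH)
  also have "\<dots> = (\<Sum>a\<in>insert x F. ctx u v (h a))" using insert.hyps by (metis sum.insert)
  finally show ?case .
qed

lemma I_cg0: "x \<in> II \<Longrightarrow> cg x 0" by (simp add: cg_def)

lemma PhPh_zero: assumes "(2::'k) \<noteq> 0" "c \<in> {1..n}" "valid_word n u" "valid_word n v"
  shows "fmon (u @ Ph c # Ph c # v) \<in> II"
proof -
  have "cg (fmon [Ph c, Ph c]) (- fmon [Ph c, Ph c])" using r_PhPh assms by blast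
  then have "fmon [Ph c, Ph c] + fmon [Ph c, Ph c] \<in> II" by (simp add: cg_def)
  then have "fsmult (inverse 2) (fmon [Ph c, Ph c] + fmon [Ph c, Ph c]) \<in> II" by (rule I_smult)
  moreover have "fsmult (inverse 2) (fmon [Ph c, Ph c] + fmon [Ph c, Ph c]) = (fmon [Ph c, Ph c] :: 'k fa)"
    using assms(1) by (auto simp: fsmult_def fun_eq_iff field_simps)
  ultimately have "fmon [Ph c, Ph c] \<in> II" by simp
  from I_ctx[OF this assms(3,4)] show ?thesis by simp
qed

lemma PsPs_zero: assumes "(2::'k) \<noteq> 0" "c \<in> {1..n}" "valid_word n u" "valid_word n v"
  shows "fmon (u @ Ps c # Ps c # v) \<in> II"
proof -
  have "cg (fmon [Ps c, Ps c]) (- fmon [Ps c, Ps c])" using r_PsPs assms by blast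
  then have "fmon [Ps c, Ps c] + fmon [Ps c, Ps c] \<in> II" by (simp add: cg_def)
  then have "fsmult (inverse 2) (fmon [Ps c, Ps c] + fmon [Ps c, Ps c]) \<in> II" by (rule I_smult)
  moreover have "fsmult (inverse 2) (fmon [Ps c, Ps c] + fmon [Ps c, Ps c]) = (fmon [Ps c, Ps c] :: 'k fa)"
    using assms(1) by (auto simp: fsmult_def fun_eq_iff field_simps)
  ultimately have "fmon [Ps c, Ps c] \<in> II" by simp
  from I_ctx[OF this assms(3,4)] show ?thesis by simp
qed

definition Lc :: "nat \<Rightarrow> gen list set" where
  "Lc c = {sw c p d v | p d v. p \<le> 1 \<and> d \<le> 1 \<and> v < m}"

lemma gdL: "p \<le> 1 \<Longrightarrow> d \<le> 1 \<Longrightarrow> v < m \<Longrightarrow> gdS (Lc c) (fmon (sw c p d v))"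
  by (rule gdS_fmon) (auto simp: Lc_def)

lemma gdZ: "fmon w \<in> II \<Longrightarrow> gdS T (fmon w)"
  by (rule gdS_cg[OF I_cg0]) simp_all

lemma PsPh_ctx: assumes "c \<in> {1..n}" "valid_word n u" "valid_word n v"
  shows "cg (fmon (u @ Ps c # Ph c # v)) (fmon (u @ v) - fmon (u @ Ph c # Ps c # v))"
  using cg_ctx[OF r_PsPh1[OF assms(1)] assms(2,3)] by simp

lemma OmPh_ctx: assumes "c \<in> {1..n}" "valid_word n u" "valid_word n v"
  shows "cg (fmon (u @ Om c # Ph c # v)) (fsmult q (fmon (u @ Ph c # Om c # v)))"
  using cg_ctx[OF r_OmPh[OF assms(1) assms(1)] assms(2,3)] by simp

lemma OmPs_ctx: assumes "c \<in> {1..n}" "valid_word n u" "valid_word n v"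
  shows "cg (fmon (u @ Om c # Ps c # v)) (fsmult (inverse q) (fmon (u @ Ps c # Om c # v)))"
  using cg_ctx[OF r_OmPs[OF assms(1) assms(1)] assms(2,3)] by simp

lemma Om_pass: assumes "c \<in> {1..n}" "p \<le> 1" "d \<le> 1"
  shows "cg (fmon (Om c # sw c p d v)) (fsmult (q ^ p * inverse q ^ d) (fmon (sw c p d (Suc v))))"
proof -
  consider "p = 0" "d = 0" | "p = 1" "d = 0" | "p = 0" "d = 1" | "p = 1" "d = 1"
    using assms by linarith
  then show ?thesis
  proof cases
    case 1 then show ?thesis by (simp add: sw_def)
  next
    case 2 then show ?thesis using OmPh_ctx[of c "[]" "replicate v (Om c)"] assms by (simp add: sw_def)
  next
    case 3 then show ?thesis using OmPs_ctx[of c "[]" "replicate v (Om c)"] assms by (simp add: sw_def)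
  next
    case 4
    have a: "cg (fmon (Om c # Ph c # Ps c # replicate v (Om c))) (fsmult q (fmon (Ph c # Om c # Ps c # replicate v (Om c))))"
      using OmPh_ctx[of c "[]" "Ps c # replicate v (Om c)"] assms by simp
    have b: "cg (fmon (Ph c # Om c # Ps c # replicate v (Om c))) (fsmult (inverse q) (fmon (Ph c # Ps c # Om c # replicate v (Om c))))"
      using OmPs_ctx[of c "[Ph c]" "replicate v (Om c)"] assms by simp
    show ?thesis using cg_trans[OF a cg_smult[OF b, of q]] 4 by (simp add: sw_def)
  qed
qed

lemma top_reduce: assumes char: "(2::'k) \<noteq> 0" and "c \<in> {1..n}" "p \<le> 1" "d \<le> 1" "m \<ge> 1"
  shows "gdS (Lc c) (fmon (sw c p d m))"
proof -
  let ?P = "replicate p (Ph c) @ replicate d (Ps c)"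
  have "cg (ctx ?P [] (fmon (replicate m (Om c)))) (ctx ?P [] (fmon [Ph c, Ps c] + fsmult ((inverse q)^m) (fmon [Ps c, Ph c])))"
    using assms by (intro cg_ctx r_Omm) auto
  then have r: "cg (fmon (sw c p d m)) (fmon (?P @ [Ph c, Ps c]) + fsmult ((inverse q)^m) (fmon (?P @ [Ps c, Ph c])))"
    by (simp add: sw_def)
  have v: "valid_word n [Ph c]" "valid_word n [Ps c]" "valid_word n [Ph c, Ps c]" using assms by auto
  have g1: "gdS (Lc c) (fmon (?P @ [Ph c, Ps c]))"
  proof -
    consider "p = 0" "d = 0" | "p = 1" "d = 0" | "p = 0" "d = 1" | "p = 1" "d = 1"
      using assms by linarith
    then show ?thesis
    proof cases
      case 1 then show ?thesis using gdL[of 1 1 0 c] assms by (simp add: sw_def)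
    next
      case 2 then show ?thesis using gdZ[OF PhPh_zero[OF char assms(2) valid_Nil v(2)]] by simp
    next
      case 3
      have h: "cg (fmon [Ps c, Ph c, Ps c]) (fmon [Ps c] - fmon [Ph c, Ps c, Ps c])"
        using PsPh_ctx[OF assms(2) valid_Nil v(2)] by simp
      have "gdS (Lc c) (fmon [Ps c] - fmon [Ph c, Ps c, Ps c])"
      proof (rule gdS_diff)
        show "gdS (Lc c) (fmon [Ps c])" using gdL[of 0 1 0 c] assms by (simp add: sw_def)
        show "gdS (Lc c) (fmon [Ph c, Ps c, Ps c])"
          using gdZ[OF PsPs_zero[OF char assms(2) v(1) valid_Nil]] by simp
      qed
      then show ?thesis using 3 gdS_cg[OF h] by simp
    next
      case 4
      have h: "cg (fmon [Ph c, Ps c, Ph c, Ps c]) (fmon [Ph c, Ps c] - fmon [Ph c, Ph c, Ps c, Ps c])"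
        using PsPh_ctx[OF assms(2) v(1) v(2)] by simp
      have "gdS (Lc c) (fmon [Ph c, Ps c] - fmon [Ph c, Ph c, Ps c, Ps c])"
      proof (rule gdS_diff)
        show "gdS (Lc c) (fmon [Ph c, Ps c])" using gdL[of 1 1 0 c] assms by (simp add: sw_def)
        show "gdS (Lc c) (fmon [Ph c, Ph c, Ps c, Ps c])"
          using gdZ[OF PhPh_zero[OF char assms(2) valid_Nil, of "[Ps c, Ps c]"]] assms(2) by simp
      qed
      then show ?thesis using 4 gdS_cg[OF h] by simp
    qed
  qed
  have g2: "gdS (Lc c) (fmon (?P @ [Ps c, Ph c]))"
  proof -
    consider "p = 0" "d = 0" | "p = 1" "d = 0" | "p = 0" "d = 1" | "p = 1" "d = 1"
      using assms by linarith
    then show ?thesis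
    proof cases
      case 1
      have h: "cg (fmon [Ps c, Ph c]) (fmon [] - fmon [Ph c, Ps c])"
        using PsPh_ctx[OF assms(2) valid_Nil valid_Nil] by simp
      have "gdS (Lc c) (fmon [] - fmon [Ph c, Ps c])"
      proof (rule gdS_diff)
        show "gdS (Lc c) (fmon [])" using gdL[of 0 0 0 c] assms by (simp add: sw_def)
        show "gdS (Lc c) (fmon [Ph c, Ps c])" using gdL[of 1 1 0 c] assms by (simp add: sw_def)
      qed
      then show ?thesis using 1 gdS_cg[OF h] by simp
    next
      case 2
      have h: "cg (fmon [Ph c, Ps c, Ph c]) (fmon [Ph c] - fmon [Ph c, Ph c, Ps c])"
        using PsPh_ctx[OF assms(2) v(1) valid_Nil] by simp
      have "gdS (Lc c) (fmon [Ph c] - fmon [Ph c, Ph c, Ps c])"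
      proof (rule gdS_diff)
        show "gdS (Lc c) (fmon [Ph c])" using gdL[of 1 0 0 c] assms by (simp add: sw_def)
        show "gdS (Lc c) (fmon [Ph c, Ph c, Ps c])"
          using gdZ[OF PhPh_zero[OF char assms(2) valid_Nil v(2)]] by simp
      qed
      then show ?thesis using 2 gdS_cg[OF h] by simp
    next
      case 3 then show ?thesis using gdZ[OF PsPs_zero[OF char assms(2) valid_Nil v(1)]] by simp
    next
      case 4 then show ?thesis using gdZ[OF PsPs_zero[OF char assms(2) v(1) v(1)]] by simp
    qed
  qed
  show ?thesis by (rule gdS_cg[OF r]) (intro gdS_add gdS_smult g1 g2)
qed

lemma loc_step: assumes char: "(2::'k) \<noteq> 0" and c: "c \<in> {1..n}" and "p \<le> 1" "d \<le> 1" "v < m"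
   "gen_idx g = c"
  shows "gdS (Lc c) (fmon (g # sw c p d v))"
proof (cases g)
  case (Ph c')
  then have g: "g = Ph c" using assms by simp
  show ?thesis
  proof (cases "p = 0")
    case True then show ?thesis using gdL[of 1 d v c] assms g by (simp add: sw_def)
  next
    case False then have "p = 1" using assms by simp
    then show ?thesis using gdZ[OF PhPh_zero[OF char c valid_Nil, of "replicate d (Ps c) @ replicate v (Om c)"]] c g
      by (simp add: sw_def)
  qed
next
  case (Ps c')
  then have g: "g = Ps c" using assms by simp
  consider "p = 0" "d = 0" | "p = 0" "d = 1" | "p = 1"
    using assms by linarith
  then show ?thesis
  proof cases
    case 1 then show ?thesis using gdL[of 0 1 v c] assms g by (simp add: sw_def)
  next
    case 2 then show ?thesis using gdZ[OF PsPs_zero[OF char c valid_Nil, of "replicate v (Om c)"]] c g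
      by (simp add: sw_def)
  next
    case 3
    let ?R = "replicate d (Ps c) @ replicate v (Om c)"
    have "cg (fmon ([] @ Ps c # Ph c # ?R)) (fmon ([] @ ?R) - fmon ([] @ Ph c # Ps c # ?R))"
      using PsPh_ctx[OF c valid_Nil, of ?R] c by simp
    moreover have "gdS (Lc c) (fmon ?R - fmon (Ph c # Ps c # ?R))"
    proof (rule gdS_diff)
      show "gdS (Lc c) (fmon ?R)" using gdL[of 0 d v c] assms by (simp add: sw_def)
      show "gdS (Lc c) (fmon (Ph c # Ps c # ?R))"
      proof (cases "d = 0")
        case True then show ?thesis using gdL[of 1 1 v c] assms by (simp add: sw_def)
      next
        case False then have "d = 1" using assms by simp
        then show ?thesis using gdZ[OF PsPs_zero[OF char c, of "[Ph c]" "replicate v (Om c)"]] c by simp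
      qed
    qed
    ultimately show ?thesis using 3 g by (simp add: sw_def) (metis gdS_cg)
  qed
next
  case (Om c')
  then have g: "g = Om c" using assms by simp
  have "gdS (Lc c) (fmon (sw c p d (Suc v)))"
  proof (cases "Suc v < m")
    case True then show ?thesis using gdL assms by simp
  next
    case False then have "Suc v = m" using assms by simp
    then show ?thesis using top_reduce[OF char c assms(3,4)] by simp
  qed
  then show ?thesis unfolding g by (rule gdS_cg[OF Om_pass[OF c assms(3,4), of v], OF gdS_smult])
qed

lemma valid_concat: "(\<forall>a\<in>set xs. valid_word n (f a)) \<Longrightarrow> valid_word n (concat (map f xs))"
  by (induction xs) auto

lemma set_sw: "x \<in> set (sw a p d v) \<Longrightarrow> gen_idx x = a"
  by (auto simp: sw_def split: if_splits)

lemma ord_word_sw: "ord_word n p d v = concat (map (\<lambda>a. sw a (p a) (d a) (v a)) [1..<n+1])"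
  by (simp add: ord_word_def sw_def)

lemma upt_split3: "c \<in> {1..n} \<Longrightarrow> [1..<n+1] = [1..<c] @ c # [Suc c..<n+1]"
proof -
  assume c: "c \<in> {1..n}"
  have "[1..<n+1] = [1..<c] @ [c..<n+1]"
    using c upt_add_eq_append[of 1 c "n + 1 - c"] by auto
  also have "[c..<n+1] = c # [Suc c..<n+1]" using c by (simp add: upt_conv_Cons)
  finally show ?thesis .
qed

lemma ord_split:
  assumes "c \<in> {1..n}"
  shows "ord_word n p d v = concat (map (\<lambda>a. sw a (p a) (d a) (v a)) [1..<c]) @ sw c (p c) (d c) (v c)
     @ concat (map (\<lambda>a. sw a (p a) (d a) (v a)) [Suc c..<n+1])"
  unfolding ord_word_sw upt_split3[OF assms] by simp

lemma core:
  assumes char: "(2::'k) \<noteq> 0" and m: "m \<ge> 1"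
    and b: "b \<in> cl_basis_words m n" and gi: "gen_idx g \<in> {1..n}"
  shows "gdS (cl_basis_words m n) (fmon (g # b))"
proof -
  obtain p d v where bw: "b = ord_word n p d v" and bd: "\<forall>a\<in>{1..n}. p a \<le> 1 \<and> d a \<le> 1 \<and> v a < m"
    using b by (auto simp: cl_basis_words_def)
  define c where "c = gen_idx g"
  have c: "c \<in> {1..n}" using gi c_def by simp
  define A where "A = concat (map (\<lambda>a. sw a (p a) (d a) (v a)) [1..<c])"
  define C where "C = concat (map (\<lambda>a. sw a (p a) (d a) (v a)) [Suc c..<n+1])"
  define S where "S = sw c (p c) (d c) (v c)"
  have b2: "b = A @ S @ C" unfolding bw A_def C_def S_def by (rule ord_split[OF c])
  have vA: "valid_word n A" unfolding A_def using c by (intro valid_concat) auto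
  have vC: "valid_word n C" unfolding C_def by (intro valid_concat) auto
  have vS: "valid_word n S" unfolding S_def using c by simp
  have nA: "\<forall>x\<in>set A. gen_idx x \<noteq> gen_idx g"
    unfolding A_def c_def[symmetric] by (auto dest!: set_sw)
  obtain e where e: "cg (fmon ([] @ g # A @ (S @ C))) (fsmult e (fmon ([] @ A @ g # (S @ C))))"
    using move_past[OF gi vA _ nA valid_Nil, of "S @ C"] vS vC by auto
  have inB: "\<forall>w\<in>Lc c. A @ w @ C \<in> cl_basis_words m n"
  proof
    fix w assume "w \<in> Lc c"
    then obtain p' d' v' where w: "w = sw c p' d' v'" "p' \<le> 1" "d' \<le> 1" "v' < m"
      by (auto simp: Lc_def)
    let ?p = "p(c := p')" and ?d = "d(c := d')" and ?v = "v(c := v')"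
    have "ord_word n ?p ?d ?v = concat (map (\<lambda>a. sw a (?p a) (?d a) (?v a)) [1..<c]) @ sw c (?p c) (?d c) (?v c)
     @ concat (map (\<lambda>a. sw a (?p a) (?d a) (?v a)) [Suc c..<n+1])" by (rule ord_split[OF c])
    also have "concat (map (\<lambda>a. sw a (?p a) (?d a) (?v a)) [1..<c]) = A"
      unfolding A_def by (intro arg_cong[where f=concat] map_cong) auto
    also have "concat (map (\<lambda>a. sw a (?p a) (?d a) (?v a)) [Suc c..<n+1]) = C"
      unfolding C_def by (intro arg_cong[where f=concat] map_cong) auto
    finally have "A @ w @ C = ord_word n ?p ?d ?v" using w(1) by (metis fun_upd_same)
    moreover have "\<forall>a\<in>{1..n}. ?p a \<le> 1 \<and> ?d a \<le> 1 \<and> ?v a < m" using bd w by auto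
    ultimately show "A @ w @ C \<in> cl_basis_words m n" unfolding cl_basis_words_def by blast
  qed
  have "gdS (Lc c) (fmon (g # S))"
    unfolding S_def using bd c by (intro loc_step[OF char c]) (auto simp: c_def)
  then have "gdS (cl_basis_words m n) (ctx A C (fmon (g # S)))"
    by (rule gdS_ctx[OF _ vA vC inB])
  then have "gdS (cl_basis_words m n) (fsmult e (fmon (A @ g # S @ C)))"
    by (intro gdS_smult) simp
  then have "gdS (cl_basis_words m n) (fmon (g # A @ S @ C))"
    using gdS_cg[OF e] by simp
  then show ?thesis using b2 by simp
qed

lemma span_word:
  assumes char: "(2::'k) \<noteq> 0" and m: "m \<ge> 1"
  shows "valid_word n w \<Longrightarrow> gdS (cl_basis_words m n) (fmon w)"
proof (induction w)
  case Nil
  have "[] = ord_word n (\<lambda>_. 0) (\<lambda>_. 0) (\<lambda>_. 0)" by (simp add: ord_word_def)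
  then have "[] \<in> cl_basis_words m n" using m unfolding cl_basis_words_def by force
  then show ?case by (rule gdS_fmon)
next
  case (Cons g w)
  then obtain h where h: "fin_supp h" "supp h \<subseteq> cl_basis_words m n" "cg (fmon w) h"
    unfolding gdS_def by auto
  have vg: "valid_word n [g]" using Cons.prems by simp
  have "cg (ctx [g] [] (fmon w)) (ctx [g] [] h)" by (rule cg_ctx[OF h(3) vg valid_Nil])
  moreover have "gdS (cl_basis_words m n) (ctx [g] [] h)"
  proof -
    have "ctx [g] [] h = (\<Sum>b\<in>supp h. ctx [g] [] (fsmult (h b) (fmon b)))"
      by (subst fa_decomp[OF h(1)]) (rule ctx_sum)
    also have "\<dots> = (\<Sum>b\<in>supp h. fsmult (h b) (fmon (g # b)))" by simp
    finally have eq: "ctx [g] [] h = (\<Sum>b\<in>supp h. fsmult (h b) (fmon (g # b)))" .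
    have fin: "finite (supp h)" using h(1) by (simp add: fin_supp_def supp_def)
    show ?thesis unfolding eq
      using h(2) Cons.prems by (intro gdS_sum[OF fin] ballI gdS_smult core[OF char m]) auto
  qed
  ultimately show ?case by (simp add: gdS_cg)
qed

lemma spanning:
  assumes char: "(2::'k) \<noteq> 0" and m: "m \<ge> 1"
    and f: "fin_supp (f::'k fa)" "\<forall>w\<in>supp f. valid_word n w"
  shows "\<exists>g. fin_supp g \<and> supp g \<subseteq> cl_basis_words m n \<and> fsub f g \<in> II"
proof -
  have fin: "finite (supp f)" using f(1) by (simp add: fin_supp_def supp_def)
  have "gdS (cl_basis_words m n) (\<Sum>b\<in>supp f. fsmult (f b) (fmon b))"
    using f(2) by (intro gdS_sum[OF fin] ballI gdS_smult span_word[OF char m]) auto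
  then have "gdS (cl_basis_words m n) f" using fa_decomp[OF f(1)] by simp
  then show ?thesis unfolding gdS_def cg_def by simp
qed

end

type_synonym lst = "bool \<times> bool \<times> nat"
type_synonym st = "nat \<Rightarrow> lst"

definition psg :: "lst \<Rightarrow> 'k::comm_ring_1" where
  "psg x = (if fst x = fst (snd x) then 1 else -1)"

definition sg :: "nat \<Rightarrow> st \<Rightarrow> 'k::comm_ring_1" where
  "sg c t = (\<Prod>a\<in>{1..<c}. psg (t a))"

definition sig :: "nat \<Rightarrow> nat \<Rightarrow> nat" where
  "sig m l = (if l < m then Suc l mod m else l)"

lemma psg_sq[simp]: "psg x * psg x = (1::'k::comm_ring_1)"
  by (simp add: psg_def)

lemma sg_sq[simp]: "sg c t * sg c t = (1::'k::comm_ring_1)"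
  unfolding sg_def prod.distrib[symmetric] by simp

lemma sg_upd: "sg c (t(a := x)) = (if a \<in> {1..<c} then psg x * psg (t a) * sg c t else (sg c t :: 'k::comm_ring_1))"
proof (cases "a \<in> {1..<c}")
  case True
  have "sg c (t(a := x)) = psg x * (\<Prod>b\<in>{1..<c}-{a}. psg (t b))"
    unfolding sg_def using True by (subst prod.remove[OF _ True]) (auto intro!: prod.cong)
  moreover have "sg c t = psg (t a) * (\<Prod>b\<in>{1..<c}-{a}. psg (t b))"
    unfolding sg_def using True by (subst prod.remove[OF _ True]) auto
  moreover have "psg (t a) * psg (t a) = (1::'k)" by simp
  ultimately show ?thesis using True
    by (metis (no_types, lifting) mult.assoc mult.left_commute mult_1)
next
  case False
  then show ?thesis unfolding sg_def by (auto intro!: prod.cong)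
qed

lemma sig_pow: "(sig m ^^ k) l = (if l < m then (l + k) mod m else l)"
proof (induction k)
  case 0 then show ?case by simp
next
  case (Suc k)
  show ?case
  proof (cases "l < m")
    case True
    then have "m > 0" by simp
    then have "(l + k) mod m < m" by simp
    then show ?thesis using Suc True by (simp add: sig_def mod_Suc_eq)
  next
    case False then show ?thesis using Suc by (simp add: sig_def)
  qed
qed

context
  fixes q :: "'k::field" and m n :: nat
  assumes q_nz: "q \<noteq> 0"
begin

definition cw :: "lst \<Rightarrow> 'k" where
  "cw x = (if fst x then inverse q else 1)"

definition kap :: "gen \<Rightarrow> st \<Rightarrow> 'k" where
  "kap g t = (case g of
      Ph c \<Rightarrow> (if fst (t c) then 0 else sg c t)
    | Ps c \<Rightarrow> (if fst (t c) then sg c t else 0)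
    | Om c \<Rightarrow> cw (t c))"

definition pi :: "gen \<Rightarrow> st \<Rightarrow> st" where
  "pi g t = (case g of
      Ph c \<Rightarrow> t(c := (True, snd (t c)))
    | Ps c \<Rightarrow> t(c := (False, snd (t c)))
    | Om c \<Rightarrow> t(c := (fst (t c), fst (snd (t c)), sig m (snd (snd (t c))))))"

fun opw :: "gen list \<Rightarrow> (st \<Rightarrow> 'k) \<Rightarrow> st \<Rightarrow> 'k" where
  "opw [] F t = F t"
| "opw (g # w) F t = kap g t * opw w F (pi g t)"

lemma opw_append: "opw (u @ w) F t = opw u (opw w F) t"
  by (induction u arbitrary: t) auto

lemma opw_append_fun: "opw (u @ w) F = opw u (opw w F)"
  by (rule ext) (rule opw_append)

lemma opw_Nil_fun[simp]: "opw [] F = F" by (rule ext) simp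

definition Lf :: "'k fa \<Rightarrow> (st \<Rightarrow> 'k) \<Rightarrow> st \<Rightarrow> 'k" where
  "Lf x F t = (\<Sum>w\<in>supp x. x w * opw w F t)"

lemma Lf_super: "finite A \<Longrightarrow> supp x \<subseteq> A \<Longrightarrow> Lf x F t = (\<Sum>w\<in>A. x w * opw w F t)"
  unfolding Lf_def by (rule sum.mono_neutral_left) (auto simp: supp_def)

lemma fin_supp_fin: "fin_supp x \<Longrightarrow> finite (supp x)" by (simp add: fin_supp_def supp_def)

lemma fin_supp_fmon[simp]: "fin_supp (fmon w :: 'k fa)"
  by (simp add: fin_supp_def fmon_def)
lemma fin_supp_add[simp]: "fin_supp x \<Longrightarrow> fin_supp y \<Longrightarrow> fin_supp (x + y :: 'k fa)"
  unfolding fin_supp_def by (rule finite_subset[of _ "{w. x w \<noteq> 0} \<union> {w. y w \<noteq> 0}"]) auto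
lemma fin_supp_diff[simp]: "fin_supp x \<Longrightarrow> fin_supp y \<Longrightarrow> fin_supp (x - y :: 'k fa)"
  unfolding fin_supp_def by (rule finite_subset[of _ "{w. x w \<noteq> 0} \<union> {w. y w \<noteq> 0}"]) auto
lemma fin_supp_smult[simp]: "fin_supp x \<Longrightarrow> fin_supp (fsmult c x :: 'k fa)"
  unfolding fin_supp_def by (rule finite_subset[of _ "{w. x w \<noteq> 0}"]) (auto simp: fsmult_def)
lemma fin_supp_zero[simp]: "fin_supp (0 :: 'k fa)"
  by (simp add: fin_supp_def)

lemma Lf_add[simp]: "fin_supp x \<Longrightarrow> fin_supp y \<Longrightarrow> Lf (x + y) F t = Lf x F t + Lf y F t"
proof -
  assume fx: "fin_supp x" and fy: "fin_supp y"
  let ?A = "supp x \<union> supp y"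
  have fin: "finite ?A" using fx fy by (simp add: fin_supp_fin)
  have "Lf (x + y) F t = (\<Sum>w\<in>?A. (x + y) w * opw w F t)"
    by (rule Lf_super[OF fin]) (auto simp: supp_def)
  also have "\<dots> = (\<Sum>w\<in>?A. x w * opw w F t) + (\<Sum>w\<in>?A. y w * opw w F t)"
    by (simp add: distrib_right sum.distrib)
  also have "\<dots> = Lf x F t + Lf y F t"
    using Lf_super[OF fin, of x] Lf_super[OF fin, of y] by auto
  finally show ?thesis .
qed

lemma Lf_smult[simp]: "Lf (fsmult c x) F t = c * Lf x F t"
proof -
  have "Lf (fsmult c x) F t = (\<Sum>w\<in>supp x. fsmult c x w * opw w F t)"
  proof (cases "finite (supp x)")
    case True then show ?thesis by (rule Lf_super) (auto simp: supp_def fsmult_def)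
  next
    case False
    show ?thesis
    proof (cases "c = 0")
      case True then show ?thesis by (simp add: Lf_def fsmult_def supp_def)
    next
      case c: False
      have "supp (fsmult c x) = supp x" using c by (auto simp: supp_def fsmult_def)
      then show ?thesis by (simp add: Lf_def)
    qed
  qed
  also have "\<dots> = c * Lf x F t" by (simp add: Lf_def sum_distrib_left fsmult_def mult.assoc)
  finally show ?thesis .
qed

lemma Lf_neg[simp]: "Lf (- x) F t = - Lf x F t"
  using Lf_smult[of "-1" x F t] by (simp add: fsmult_minus1)

lemma Lf_diff[simp]: "fin_supp x \<Longrightarrow> fin_supp y \<Longrightarrow> Lf (x - y) F t = Lf x F t - Lf y F t"
  using Lf_add[of x "- y" F t] by (simp add: fin_supp_def)

lemma Lf_fmon[simp]: "Lf (fmon w) F t = opw w F t"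
  by (subst Lf_super[of "{w}"]) (auto simp: supp_def fmon_def)

lemma Lf_zero[simp]: "Lf 0 F t = 0"
  by (simp add: Lf_def supp_def)

lemma opw_Om_pow: "opw (replicate k (Om a)) F t =
   cw (t a) ^ k * F (t(a := (fst (t a), fst (snd (t a)), (sig m ^^ k) (snd (snd (t a))))))"
proof (induction k arbitrary: t)
  case 0 then show ?case by simp
next
  case (Suc k)
  obtain i j l where ta: "t a = (i, j, l)" by (cases "t a")
  show ?case by (simp add: Suc ta kap_def pi_def cw_def funpow_Suc_right fun_upd_upd fun_upd_same del: funpow.simps fun_upd_apply)
qed

lemma R1: "opw [Om a, Om b] F t = opw [Om b, Om a] F t"
proof -
  obtain i j l where ta: "t a = (i, j, l)" by (cases "t a")
  obtain i' j' l' where tb: "t b = (i', j', l')" by (cases "t b")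
  show ?thesis
    by (cases "a = b") (simp_all add: ta tb kap_def pi_def cw_def fun_upd_twist fun_upd_upd fun_upd_same fun_upd_other del: fun_upd_apply)
qed

lemma R3: "1 \<le> a \<Longrightarrow> 1 \<le> b \<Longrightarrow> opw [Om a, Ph b] F t = (if a = b then q else 1) * opw [Ph b, Om a] F t"
proof -
  assume ab: "1 \<le> a" "1 \<le> b"
  obtain i j l where ta: "t a = (i, j, l)" by (cases "t a")
  obtain i' j' l' where tb: "t b = (i', j', l')" by (cases "t b")
  show ?thesis
    using q_nz by (cases "a = b") (simp_all add: ta tb kap_def pi_def cw_def fun_upd_twist sg_upd psg_def fun_upd_upd fun_upd_same fun_upd_other del: fun_upd_apply)
qed

lemma R4: "1 \<le> a \<Longrightarrow> 1 \<le> b \<Longrightarrow> opw [Om a, Ps b] F t = (if a = b then inverse q else 1) * opw [Ps b, Om a] F t"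
proof -
  assume ab: "1 \<le> a" "1 \<le> b"
  obtain i j l where ta: "t a = (i, j, l)" by (cases "t a")
  obtain i' j' l' where tb: "t b = (i', j', l')" by (cases "t b")
  show ?thesis
    using q_nz by (cases "a = b") (simp_all add: ta tb kap_def pi_def cw_def fun_upd_twist sg_upd psg_def fun_upd_upd fun_upd_same fun_upd_other del: fun_upd_apply)
qed

lemma R5: "1 \<le> a \<Longrightarrow> 1 \<le> b \<Longrightarrow> opw [Ph a, Ph b] F t + opw [Ph b, Ph a] F t = 0"
proof -
  assume ab: "1 \<le> a" "1 \<le> b"
  obtain i j l where ta: "t a = (i, j, l)" by (cases "t a")
  obtain i' j' l' where tb: "t b = (i', j', l')" by (cases "t b")
  show ?thesis
    using ab by (cases a b rule: linorder_cases) (simp_all add: ta tb kap_def pi_def cw_def fun_upd_twist sg_upd psg_def fun_upd_upd fun_upd_same fun_upd_other del: fun_upd_apply)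
qed

lemma R6: "1 \<le> a \<Longrightarrow> 1 \<le> b \<Longrightarrow> opw [Ps a, Ps b] F t + opw [Ps b, Ps a] F t = 0"
proof -
  assume ab: "1 \<le> a" "1 \<le> b"
  obtain i j l where ta: "t a = (i, j, l)" by (cases "t a")
  obtain i' j' l' where tb: "t b = (i', j', l')" by (cases "t b")
  show ?thesis
    using ab by (cases a b rule: linorder_cases) (simp_all add: ta tb kap_def pi_def cw_def fun_upd_twist sg_upd psg_def fun_upd_upd fun_upd_same fun_upd_other del: fun_upd_apply)
qed

lemma R9: "1 \<le> a \<Longrightarrow> 1 \<le> b \<Longrightarrow> a \<noteq> b \<Longrightarrow> opw [Ph a, Ps b] F t + opw [Ps b, Ph a] F t = 0"
proof -
  assume ab: "1 \<le> a" "1 \<le> b" "a \<noteq> b"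
  obtain i j l where ta: "t a = (i, j, l)" by (cases "t a")
  obtain i' j' l' where tb: "t b = (i', j', l')" by (cases "t b")
  show ?thesis
    using ab by (cases a b rule: linorder_cases) (simp_all add: ta tb kap_def pi_def cw_def fun_upd_twist sg_upd psg_def fun_upd_upd fun_upd_same fun_upd_other del: fun_upd_apply)
qed

lemma R7: "opw [Ph a, Ps a] F t + opw [Ps a, Ph a] F t = F t"
proof -
  obtain i j l where ta: "t a = (i, j, l)" by (cases "t a")
  have tt: "\<And>i'. i' = i \<Longrightarrow> t(a := (i', j, l)) = t" using ta by auto
  show ?thesis
    by (simp add: ta kap_def pi_def sg_upd fun_upd_upd fun_upd_same tt mult.assoc[symmetric] del: fun_upd_apply)
qed

lemma R8: "opw [Ph a, Ps a] F t + (inverse q)^m * opw [Ps a, Ph a] F t = opw (replicate m (Om a)) F t"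
proof -
  obtain i j l where ta: "t a = (i, j, l)" by (cases "t a")
  have tt: "\<And>i'. i' = i \<Longrightarrow> t(a := (i', j, l)) = t" using ta by auto
  have "(sig m ^^ m) l = l" by (simp add: sig_pow)
  then show ?thesis
    by (simp add: opw_Om_pow ta kap_def pi_def sg_upd cw_def fun_upd_upd fun_upd_same tt mult.assoc[symmetric] del: fun_upd_apply)
qed

lemma R2: "opw (replicate (2*m) (Om a)) F t - (1 + (inverse q)^m) * opw (replicate m (Om a)) F t
    + (inverse q)^m * F t = 0"
proof -
  obtain i j l where ta: "t a = (i, j, l)" by (cases "t a")
  have tt: "\<And>i'. i' = i \<Longrightarrow> t(a := (i', j, l)) = t" using ta by auto
  have "(sig m ^^ m) l = l" by (simp add: sig_pow)
  moreover have "(sig m ^^ (2*m)) l = l" by (simp add: sig_pow)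
  moreover have "(inverse q ^ (2*m)) = inverse q ^ m * inverse q ^ m"
    by (simp add: mult_2 power_add)
  ultimately show ?thesis
    by (simp add: opw_Om_pow ta cw_def tt del: fun_upd_apply) (simp add: algebra_simps)
qed

definition AN :: "'k fa \<Rightarrow> bool" where
  "AN x \<longleftrightarrow> fin_supp x \<and> (\<forall>F t. Lf x F t = 0)"

lemma AN_1: "a \<in> {1..n} \<Longrightarrow> b \<in> {1..n} \<Longrightarrow> AN (fsub (fmon [Om a, Om b]) (fmon [Om b, Om a]))"
  unfolding AN_def using R1 by (simp del: opw.simps)
lemma AN_2: "a \<in> {1..n} \<Longrightarrow> AN (fadd (fsub (fmon (replicate (2*m) (Om a)))
                   (fsmult (1 + (inverse q)^m) (fmon (replicate m (Om a)))))
             (fsmult ((inverse q)^m) (fmon [])))"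
  unfolding AN_def using R2 by (simp del: opw.simps)
lemma AN_3: "a \<in> {1..n} \<Longrightarrow> b \<in> {1..n} \<Longrightarrow>
   AN (fsub (fmon [Om a, Ph b]) (fsmult (if a = b then q else 1) (fmon [Ph b, Om a])))"
  unfolding AN_def using R3[of a b] by (simp del: opw.simps)
lemma AN_4: "a \<in> {1..n} \<Longrightarrow> b \<in> {1..n} \<Longrightarrow>
   AN (fsub (fmon [Om a, Ps b]) (fsmult (if a = b then inverse q else 1) (fmon [Ps b, Om a])))"
  unfolding AN_def using R4[of a b] by (simp del: opw.simps)
lemma AN_5: "a \<in> {1..n} \<Longrightarrow> b \<in> {1..n} \<Longrightarrow> AN (fadd (fmon [Ph a, Ph b]) (fmon [Ph b, Ph a]))"
  unfolding AN_def using R5[of a b] by (simp del: opw.simps)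
lemma AN_6: "a \<in> {1..n} \<Longrightarrow> b \<in> {1..n} \<Longrightarrow> AN (fadd (fmon [Ps a, Ps b]) (fmon [Ps b, Ps a]))"
  unfolding AN_def using R6[of a b] by (simp del: opw.simps)
lemma AN_7: "a \<in> {1..n} \<Longrightarrow> AN (fsub (fadd (fmon [Ph a, Ps a]) (fmon [Ps a, Ph a])) (fmon []))"
  unfolding AN_def using R7[of a] by (simp del: opw.simps)
lemma AN_8: "a \<in> {1..n} \<Longrightarrow> AN (fsub (fadd (fmon [Ph a, Ps a]) (fsmult ((inverse q)^m) (fmon [Ps a, Ph a])))
             (fmon (replicate m (Om a))))"
  unfolding AN_def using R8[of a] by (simp del: opw.simps)
lemma AN_9: "a \<in> {1..n} \<Longrightarrow> b \<in> {1..n} \<Longrightarrow> a \<noteq> b \<Longrightarrow> AN (fadd (fmon [Ph a, Ps b]) (fmon [Ps b, Ph a]))"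
  unfolding AN_def using R9[of a b] by (simp del: opw.simps)

lemma AN_rels: "r \<in> cl_rels q m n \<Longrightarrow> AN r"
  unfolding cl_rels_def
  apply (elim UN_E UnE insertE)
  apply (hypsubst, (rule AN_1 AN_2 AN_3 AN_4 AN_5 AN_6 AN_7 AN_8; assumption))+
  apply (auto split: if_split_asm simp del: fadd_eq intro!: AN_9)
  done

lemma opw_lin: "opw u (\<lambda>s. \<Sum>i\<in>A. c i * G i s) t = (\<Sum>i\<in>A. c i * opw u (G i) t)"
  by (induction u arbitrary: t) (auto simp: sum_distrib_left mult.left_commute)

lemma Lf_ctx: assumes "fin_supp x"
  shows "Lf (ctx u v x) F t = opw u (Lf x (opw v F)) t"
proof -
  have fin: "finite (supp x)" using assms by (rule fin_supp_fin)
  have inj: "inj_on (\<lambda>w. u @ w @ v) (supp x)" by (auto intro: inj_onI)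
  have "Lf (ctx u v x) F t = (\<Sum>w\<in>supp x. ctx u v x (u @ w @ v) * opw (u @ w @ v) F t)"
    unfolding Lf_def supp_ctx by (rule sum.reindex[OF inj, unfolded comp_def])
  also have "\<dots> = (\<Sum>w\<in>supp x. x w * opw u (opw w (opw v F)) t)"
    by (simp add: opw_append_fun)
  also have "\<dots> = opw u (Lf x (opw v F)) t"
    unfolding Lf_def by (rule opw_lin[symmetric])
  finally show ?thesis .
qed

lemma ctx_left: "fmul (fmon u) x = ctx u [] x"
  by (simp add: fmul_fmon_left ctx_def rm_def)
lemma ctx_right: "fmul x (fmon u) = ctx [] u x"
  by (simp add: fmul_fmon_right ctx_def lm_def)

lemma opw_zero: "opw u (\<lambda>s. 0) t = 0"
  using opw_lin[where A="{}" and u=u and t=t] by simp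

lemma ideal_AN: "x \<in> cl_ideal q m n \<Longrightarrow> AN x"
proof (induction rule: cl_ideal.induct)
  case (rel r) then show ?case by (rule AN_rels)
next
  case zero then show ?case by (simp add: AN_def zero_fun_def[symmetric])
next
  case (add x y)
  then have "fin_supp (x + y) \<and> (\<forall>F t. Lf (x + y) F t = 0)" unfolding AN_def
    by (simp only: fin_supp_add Lf_add) simp
  then show ?case unfolding AN_def fadd_eq .
next
  case (smult x c) then show ?case unfolding AN_def by (simp only: fin_supp_smult Lf_smult) simp
next
  case (lmul x u)
  then have z: "\<And>G. Lf x G = (\<lambda>_. 0)" by (auto simp: AN_def fun_eq_iff)
  from lmul show ?case unfolding ctx_left AN_def
    by (simp add: Lf_ctx fin_supp_ctx opw_zero z AN_def del: opw.simps)
next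
  case (rmul x u)
  then have z: "\<And>G. Lf x G = (\<lambda>_. 0)" by (auto simp: AN_def fun_eq_iff)
  from rmul show ?case unfolding ctx_right AN_def
    by (simp add: Lf_ctx fin_supp_ctx opw_zero z AN_def del: opw.simps)
qed

definition prodv :: "(nat \<Rightarrow> lst \<Rightarrow> 'k) \<Rightarrow> st \<Rightarrow> 'k" where
  "prodv f s = (\<Prod>a\<in>{1..n}. f a (s a))"

definition evn :: "(lst \<Rightarrow> 'k) \<Rightarrow> bool" where
  "evn h \<longleftrightarrow> (\<forall>x. h x \<noteq> 0 \<longrightarrow> fst x = fst (snd x))"

definition phl :: "(lst \<Rightarrow> 'k) \<Rightarrow> lst \<Rightarrow> 'k" where
  "phl h x = (if fst x then 0 else h (True, snd x))"
definition psl :: "(lst \<Rightarrow> 'k) \<Rightarrow> lst \<Rightarrow> 'k" where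
  "psl h x = (if fst x then h (False, snd x) else 0)"
definition oml :: "(lst \<Rightarrow> 'k) \<Rightarrow> lst \<Rightarrow> 'k" where
  "oml h x = cw x * h (fst x, fst (snd x), sig m (snd (snd x)))"

lemma prodv_split: "c \<in> {1..n} \<Longrightarrow> prodv f s = f c (s c) * (\<Prod>a\<in>{1..n}-{c}. f a (s a))"
  unfolding prodv_def by (rule prod.remove) auto

lemma rest_upd_f[simp]: "(\<Prod>a\<in>{1..n}-{c}. (f(c := h)) a (s a)) = (\<Prod>a\<in>{1..n}-{c}. f a (s a))"
  by (rule prod.cong) auto
lemma rest_upd_s[simp]: "(\<Prod>a\<in>{1..n}-{c}. f a ((s(c := x)) a)) = (\<Prod>a\<in>{1..n}-{c}. f a (s a))"
  by (rule prod.cong) auto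

lemma rest_upd: "(\<Prod>a\<in>{1..n}-{c}. (f(c := h)) a ((s(c := x)) a)) = (\<Prod>a\<in>{1..n}-{c}. f a (s a))"
  by (rule prod.cong) auto

lemma sg_even:
  assumes c: "c \<in> {1..n}" and ev: "\<forall>a\<in>{1..<c}. evn (f a)"
  shows "sg c t * (\<Prod>a\<in>{1..n}-{c}. f a (t a)) = (\<Prod>a\<in>{1..n}-{c}. f a (t a))"
proof (cases "(\<Prod>a\<in>{1..n}-{c}. f a (t a)) = 0")
  case True then show ?thesis by simp
next
  case False
  then have nz: "\<forall>a\<in>{1..n}-{c}. f a (t a) \<noteq> 0" by auto
  have "\<forall>a\<in>{1..<c}. psg (t a) = (1::'k)"
  proof
    fix a assume a: "a \<in> {1..<c}"
    then have "a \<in> {1..n}-{c}" using c by auto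
    then have "f a (t a) \<noteq> 0" using nz by blast
    then have "fst (t a) = fst (snd (t a))" using ev a unfolding evn_def by blast
    then show "psg (t a) = (1::'k)" by (simp add: psg_def)
  qed
  then have "sg c t = (1::'k)" unfolding sg_def by simp
  then show ?thesis by simp
qed

lemma prodv_f: "c \<in> {1..n} \<Longrightarrow> prodv (f(c := h)) t = h (t c) * (\<Prod>a\<in>{1..n}-{c}. f a (t a))"
  by (simp only: prodv_split rest_upd_f fun_upd_same)
lemma prodv_s: "c \<in> {1..n} \<Longrightarrow> prodv f (t(c := x)) = f c x * (\<Prod>a\<in>{1..n}-{c}. f a (t a))"
  by (simp only: prodv_split rest_upd_s fun_upd_same)

lemma step_Ph:
  assumes c: "c \<in> {1..n}" and ev: "\<forall>a\<in>{1..<c}. evn (f a)"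
  shows "opw [Ph c] (prodv f) = prodv (f(c := phl (f c)))"
proof (rule ext)
  fix t :: st
  obtain i j l where tc: "t c = (i, j, l)" by (cases "t c")
  let ?R = "\<Prod>a\<in>{1..n}-{c}. f a (t a)"
  have "opw [Ph c] (prodv f) t = kap (Ph c) t * prodv f (pi (Ph c) t)" by simp
  also have "\<dots> = (if i then 0 else sg c t * (f c (True, j, l) * ?R))"
    by (simp add: kap_def pi_def tc prodv_s[OF c] del: fun_upd_apply)
  also have "\<dots> = phl (f c) (t c) * ?R"
    using sg_even[OF c ev, of t] by (auto simp: phl_def tc mult.assoc[symmetric])
  also have "\<dots> = prodv (f(c := phl (f c))) t" by (simp only: prodv_f[OF c])
  finally show "opw [Ph c] (prodv f) t = prodv (f(c := phl (f c))) t" .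
qed

lemma step_Ps:
  assumes c: "c \<in> {1..n}" and ev: "\<forall>a\<in>{1..<c}. evn (f a)"
  shows "opw [Ps c] (prodv f) = prodv (f(c := psl (f c)))"
proof (rule ext)
  fix t :: st
  obtain i j l where tc: "t c = (i, j, l)" by (cases "t c")
  let ?R = "\<Prod>a\<in>{1..n}-{c}. f a (t a)"
  have "opw [Ps c] (prodv f) t = kap (Ps c) t * prodv f (pi (Ps c) t)" by simp
  also have "\<dots> = (if i then sg c t * (f c (False, j, l) * ?R) else 0)"
    by (simp add: kap_def pi_def tc prodv_s[OF c] del: fun_upd_apply)
  also have "\<dots> = psl (f c) (t c) * ?R"
    using sg_even[OF c ev, of t] by (auto simp: psl_def tc mult.assoc[symmetric])
  also have "\<dots> = prodv (f(c := psl (f c))) t" by (simp only: prodv_f[OF c])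
  finally show "opw [Ps c] (prodv f) t = prodv (f(c := psl (f c))) t" .
qed

lemma step_Om:
  assumes c: "c \<in> {1..n}"
  shows "opw [Om c] (prodv f) = prodv (f(c := oml (f c)))"
proof (rule ext)
  fix t :: st
  obtain i j l where tc: "t c = (i, j, l)" by (cases "t c")
  let ?R = "\<Prod>a\<in>{1..n}-{c}. f a (t a)"
  have "opw [Om c] (prodv f) t = kap (Om c) t * prodv f (pi (Om c) t)" by simp
  also have "\<dots> = cw (i, j, l) * (f c (i, j, sig m l) * ?R)"
    by (simp add: kap_def pi_def tc prodv_s[OF c] del: fun_upd_apply)
  also have "\<dots> = oml (f c) (t c) * ?R"
    by (simp add: oml_def tc mult.assoc)
  also have "\<dots> = prodv (f(c := oml (f c))) t" by (simp only: prodv_f[OF c])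
  finally show "opw [Om c] (prodv f) t = prodv (f(c := oml (f c))) t" .
qed

lemma rep_step:
  assumes c: "c \<in> {1..n}" and st: "\<And>f. \<forall>a\<in>{1..<c}. evn (f a) \<Longrightarrow> opw [g] (prodv f) = prodv (f(c := L (f c)))"
  shows "\<forall>a\<in>{1..<c}. evn (f a) \<Longrightarrow> opw (replicate k g) (prodv f) = prodv (f(c := (L ^^ k) (f c)))"
proof (induction k)
  case 0 then show ?case by (simp add: fun_upd_idem)
next
  case (Suc k)
  have "opw (replicate (Suc k) g) (prodv f) = opw [g] (opw (replicate k g) (prodv f))"
    using opw_append_fun[of "[g]" "replicate k g"] by simp
  also have "\<dots> = opw [g] (prodv (f(c := (L ^^ k) (f c))))" using Suc.IH[OF Suc.prems] by (simp only:)
  also have "\<dots> = prodv ((f(c := (L ^^ k) (f c)))(c := L ((L ^^ k) (f c))))"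
    using st[of "f(c := (L ^^ k) (f c))"] Suc.prems by auto
  also have "\<dots> = prodv (f(c := (L ^^ Suc k) (f c)))" by (simp only: fun_upd_upd funpow.simps comp_apply)
  finally show ?case .
qed

definition loc :: "nat \<Rightarrow> nat \<Rightarrow> nat \<Rightarrow> (lst \<Rightarrow> 'k) \<Rightarrow> lst \<Rightarrow> 'k" where
  "loc p d v h = (phl ^^ p) ((psl ^^ d) ((oml ^^ v) h))"

lemma site_step:
  assumes c: "c \<in> {1..n}" and ev: "\<forall>a\<in>{1..<c}. evn (f a)"
  shows "opw (sw c p d v) (prodv f) = prodv (f(c := loc p d v (f c)))"
proof -
  have ev': "\<And>h. \<forall>a\<in>{1..<c}. evn ((f(c := h)) a)" using ev by auto
  have "opw (sw c p d v) (prodv f) =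
     opw (replicate p (Ph c)) (opw (replicate d (Ps c)) (opw (replicate v (Om c)) (prodv f)))"
    by (simp add: sw_def opw_append_fun)
  also have "opw (replicate v (Om c)) (prodv f) = prodv (f(c := (oml ^^ v) (f c)))"
    by (rule rep_step[OF c step_Om[OF c] ev])
  also have "opw (replicate d (Ps c)) (prodv (f(c := (oml ^^ v) (f c)))) =
      prodv (f(c := (psl ^^ d) ((oml ^^ v) (f c))))"
    using rep_step[OF c step_Ps[OF c], of "f(c := (oml ^^ v) (f c))" d] ev' by simp
  also have "opw (replicate p (Ph c)) (prodv (f(c := (psl ^^ d) ((oml ^^ v) (f c))))) =
      prodv (f(c := loc p d v (f c)))"
    using rep_step[OF c step_Ph[OF c], of "f(c := (psl ^^ d) ((oml ^^ v) (f c)))" p] ev'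
    by (simp add: loc_def)
  finally show ?thesis .
qed

lemma concat_step:
  assumes "sorted_wrt (<) xs" "set xs \<subseteq> {1..n}" "\<forall>a. evn (f a)"
  shows "opw (concat (map (\<lambda>a. sw a (p a) (d a) (v a)) xs)) (prodv f) =
     prodv (\<lambda>a. if a \<in> set xs then loc (p a) (d a) (v a) (f a) else f a)"
  using assms(1,2)
proof (induction xs)
  case Nil then show ?case by simp
next
  case (Cons x xs)
  let ?f = "\<lambda>a. if a \<in> set xs then loc (p a) (d a) (v a) (f a) else f a"
  have x: "x \<in> {1..n}" using Cons.prems by auto
  have ev: "\<forall>a\<in>{1..<x}. evn (?f a)" using Cons.prems assms(3) by auto
  have "opw (concat (map (\<lambda>a. sw a (p a) (d a) (v a)) (x # xs))) (prodv f)
      = opw (sw x (p x) (d x) (v x)) (prodv ?f)"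
    using Cons by (simp add: opw_append_fun)
  also have "\<dots> = prodv (?f(x := loc (p x) (d x) (v x) (?f x)))"
    by (rule site_step[OF x ev])
  also have "?f(x := loc (p x) (d x) (v x) (?f x)) =
     (\<lambda>a. if a \<in> set (x # xs) then loc (p a) (d a) (v a) (f a) else f a)"
    using Cons.prems by (auto simp: fun_eq_iff)
  finally show ?case .
qed

definition u0 :: "lst \<Rightarrow> 'k" where
  "u0 x = (if fst x = fst (snd x) \<and> snd (snd x) = 0 then 1 else 0)"

lemma ord_word_v0: "opw (ord_word n p d v) (prodv (\<lambda>_. u0)) = prodv (\<lambda>a. loc (p a) (d a) (v a) u0)"
proof -
  have "opw (ord_word n p d v) (prodv (\<lambda>_. u0)) =
     prodv (\<lambda>a. if a \<in> set [1..<n+1] then loc (p a) (d a) (v a) u0 else u0)"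
    unfolding ord_word_sw by (rule concat_step) (auto simp: evn_def u0_def simp del: upt_Suc)
  also have "\<dots> = prodv (\<lambda>a. loc (p a) (d a) (v a) u0)"
    unfolding prodv_def by (intro ext prod.cong) auto
  finally show ?thesis .
qed

lemma oml_pow: "(oml ^^ v) h x = cw x ^ v * h (fst x, fst (snd x), (sig m ^^ v) (snd (snd x)))"
proof (induction v arbitrary: x)
  case 0 then show ?case by simp
next
  case (Suc v)
  obtain i j l where x: "x = (i, j, l)" by (cases x)
  have "(oml ^^ Suc v) h x = oml ((oml ^^ v) h) x" by simp
  also have "\<dots> = cw x * (oml ^^ v) h (i, j, sig m l)" by (simp only: oml_def x fst_conv snd_conv)
  also have "\<dots> = cw x ^ Suc v * h (fst x, fst (snd x), (sig m ^^ Suc v) (snd (snd x)))"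
    by (simp only: Suc) (simp add: x cw_def funpow_Suc_right del: funpow.simps)
  finally show ?case .
qed

definition tau :: "nat \<Rightarrow> nat \<Rightarrow> nat \<Rightarrow> lst" where
  "tau p d v = (p = 0, d = 0, (m - v) mod m)"

lemma Zlem: assumes "m \<ge> 1" "v < m" "v' < m"
  shows "(sig m ^^ v') ((m - v) mod m) = 0 \<longleftrightarrow> v' = v"
proof -
  have lt: "(m - v) mod m < m" using assms by simp
  have "(sig m ^^ v') ((m - v) mod m) = ((m - v) mod m + v') mod m"
    using lt by (simp add: sig_pow)
  also have "\<dots> = 0 \<longleftrightarrow> v' = v"
  proof (cases "v = 0")
    case True then show ?thesis using assms by simp
  next
    case False
    then have e: "(m - v) mod m = m - v" using assms by simp
    have "(m - v + v') mod m = 0 \<longleftrightarrow> m - v + v' = m"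
    proof
      assume h: "(m - v + v') mod m = 0"
      have "m - v + v' < 2 * m" "0 < m - v + v'" using assms by auto
      from h obtain k where k: "m - v + v' = m * k" by (auto simp: mod_eq_0_iff_dvd elim!: dvdE)
      have "k \<noteq> 0" using k \<open>0 < m - v + v'\<close> by (cases k) auto
      moreover have "k < 2" using k \<open>m - v + v' < 2 * m\<close> by (metis mult.commute mult_less_cancel1)
      ultimately have "k = 1" by linarith
      then show "m - v + v' = m" using k by simp
    qed simp
    then show ?thesis using e assms by auto
  qed
  finally show ?thesis .
qed

lemma loc_self: assumes "m \<ge> 1" "p \<le> 1" "d \<le> 1" "v < m"
  shows "loc p d v u0 (tau p d v) \<noteq> 0"
proof -
  have Z: "(sig m ^^ v) ((m - v) mod m) = 0" using Zlem[OF assms(1,4,4)] by simp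
  consider "p = 0" "d = 0" | "p = 0" "d = 1" | "p = 1" "d = 0" | "p = 1" "d = 1"
    using assms by linarith
  then show ?thesis
    by cases (simp_all add: loc_def tau_def phl_def psl_def oml_pow u0_def cw_def Z q_nz)
qed

lemma loc_other: assumes "m \<ge> 1" "p \<le> 1" "d \<le> 1" "v < m" "p' \<le> 1" "d' \<le> 1" "v' < m"
    and nz: "loc p' d' v' u0 (tau p d v) \<noteq> 0"
  shows "v' = v \<and> ((p' = p \<and> d' = d) \<or> (p' = 0 \<and> d' = 0 \<and> p = 1 \<and> d = 1))"
proof -
  have Z: "(sig m ^^ v') ((m - v) mod m) = 0 \<longleftrightarrow> v' = v" using Zlem[OF assms(1,4,7)] .
  have "p \<in> {0, 1}" "d \<in> {0, 1}" "p' \<in> {0, 1}" "d' \<in> {0, 1}" using assms by auto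
  then show ?thesis using nz
    by (auto simp: loc_def tau_def phl_def psl_def oml_pow u0_def cw_def Z split: if_splits)
qed

lemma count_rep: "count_list (replicate k x) y = (if x = y then k else 0)"
  by (induction k) auto

lemma count_sw:
  "count_list (sw a p d v) (Ph b) = (if a = b then p else 0)"
  "count_list (sw a p d v) (Ps b) = (if a = b then d else 0)"
  "count_list (sw a p d v) (Om b) = (if a = b then v else 0)"
  by (auto simp: sw_def count_rep)

lemma count_concat:
  assumes "distinct xs"
  shows "count_list (concat (map (\<lambda>a. sw a (p a) (d a) (v a)) xs)) (Ph b) = (if b \<in> set xs then p b else 0)"
    "count_list (concat (map (\<lambda>a. sw a (p a) (d a) (v a)) xs)) (Ps b) = (if b \<in> set xs then d b else 0)"
    "count_list (concat (map (\<lambda>a. sw a (p a) (d a) (v a)) xs)) (Om b) = (if b \<in> set xs then v b else 0)"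
  using assms by (induction xs) (auto simp: count_sw)

definition pc :: "gen list \<Rightarrow> nat \<Rightarrow> nat" where "pc w a = count_list w (Ph a)"
definition dc :: "gen list \<Rightarrow> nat \<Rightarrow> nat" where "dc w a = count_list w (Ps a)"
definition vc :: "gen list \<Rightarrow> nat \<Rightarrow> nat" where "vc w a = count_list w (Om a)"

lemma B_decode:
  assumes "w \<in> cl_basis_words m n"
  shows "w = ord_word n (pc w) (dc w) (vc w)" "\<forall>a\<in>{1..n}. pc w a \<le> 1 \<and> dc w a \<le> 1 \<and> vc w a < m"
proof -
  obtain p d v where w: "w = ord_word n p d v" and bd: "\<forall>a\<in>{1..n}. p a \<le> 1 \<and> d a \<le> 1 \<and> v a < m"
    using assms by (auto simp: cl_basis_words_def)
  have st: "set [1..<n+1] = {1..n}" by auto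
  note cc = count_concat[OF distinct_upt[of 1 "n+1"], where p=p and d=d and v=v, unfolded st ord_word_sw[symmetric]]
  have e: "\<forall>a\<in>{1..n}. pc w a = p a \<and> dc w a = d a \<and> vc w a = v a"
    unfolding w pc_def dc_def vc_def cc by simp
  show "w = ord_word n (pc w) (dc w) (vc w)"
    unfolding ord_word_sw
    by (subst w, unfold ord_word_sw) (intro arg_cong[where f=concat] map_cong, use e st in auto)
  show "\<forall>a\<in>{1..n}. pc w a \<le> 1 \<and> dc w a \<le> 1 \<and> vc w a < m" using e bd by auto
qed

lemma indep:
  assumes m: "m \<ge> 1" and g: "fin_supp (g::'k fa)" "supp g \<subseteq> cl_basis_words m n" "g \<in> II q m n"
  shows "g = (\<lambda>_. 0)"
proof (rule ccontr)
  assume "g \<noteq> (\<lambda>_. 0)"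
  then have ne: "supp g \<noteq> {}" by (auto simp: supp_def)
  have fin: "finite (supp g)" using g(1) by (rule fin_supp_fin)
  define P where "P w a = (pc w a, dc w a, vc w a)" for w a
  define Wv where "Wv w = prodv (\<lambda>a. loc (pc w a) (dc w a) (vc w a) u0)" for w
  have opw_eq: "opw w (prodv (\<lambda>_. u0)) = Wv w" if "w \<in> supp g" for w
  proof -
    have "w \<in> cl_basis_words m n" using that g(2) by blast
    then have "w = ord_word n (pc w) (dc w) (vc w)" by (rule B_decode)
    then show ?thesis unfolding Wv_def by (metis ord_word_v0)
  qed
  have AN: "AN g" by (rule ideal_AN[OF g(3)])
  have sum0: "(\<Sum>w\<in>supp g. g w * Wv w t) = 0" for t
    using AN opw_eq unfolding AN_def Lf_def
    by (metis (no_types, lifting) sum.cong)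
  define N where "N w = card {a\<in>{1..n}. pc w a = 1 \<and> dc w a = 1}" for w
  define k where "k = Min (N ` supp g)"
  have "k \<in> N ` supp g" unfolding k_def using fin ne by (intro Min_in) auto
  then obtain w0 where w0: "w0 \<in> supp g" "N w0 = k" by blast
  have kmin: "N w0 \<le> N w" if "w \<in> supp g" for w
    using w0(2) that fin unfolding k_def by (auto intro: Min_le)
  have bd0: "\<forall>a\<in>{1..n}. pc w0 a \<le> 1 \<and> dc w0 a \<le> 1 \<and> vc w0 a < m"
    using w0(1) g(2) B_decode(2) by blast
  define t0 where "t0 a = tau (pc w0 a) (dc w0 a) (vc w0 a)" for a
  have other: "Wv w t0 = 0" if w: "w \<in> supp g" "w \<noteq> w0" for w
  proof (rule ccontr)
    assume nz: "Wv w t0 \<noteq> 0"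
    have bd: "\<forall>a\<in>{1..n}. pc w a \<le> 1 \<and> dc w a \<le> 1 \<and> vc w a < m"
      using w(1) g(2) B_decode(2) by blast
    have fac: "loc (pc w a) (dc w a) (vc w a) u0 (t0 a) \<noteq> 0" if "a \<in> {1..n}" for a
      using nz that unfolding Wv_def prodv_def by auto
    have rel: "vc w a = vc w0 a \<and> ((pc w a = pc w0 a \<and> dc w a = dc w0 a) \<or>
        (pc w a = 0 \<and> dc w a = 0 \<and> pc w0 a = 1 \<and> dc w0 a = 1))" if "a \<in> {1..n}" for a
      using loc_other[OF m _ _ _ _ _ _ fac[OF that, unfolded t0_def]] bd bd0 that by blast
    let ?S = "\<lambda>w. {a\<in>{1..n}. pc w a = 1 \<and> dc w a = 1}"
    have sub: "?S w \<subseteq> ?S w0"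
    proof
      fix a assume a: "a \<in> ?S w"
      then have "a \<in> {1..n}" by simp
      from rel[OF this] a show "a \<in> ?S w0" by auto
    qed
    have "\<exists>a\<in>{1..n}. P w a \<noteq> P w0 a"
    proof (rule ccontr)
      assume "\<not> (\<exists>a\<in>{1..n}. P w a \<noteq> P w0 a)"
      then have e: "\<forall>a\<in>{1..n}. pc w a = pc w0 a \<and> dc w a = dc w0 a \<and> vc w a = vc w0 a"
        by (auto simp: P_def)
      have "w = ord_word n (pc w) (dc w) (vc w)" using w(1) g(2) B_decode(1) by blast
      also have "\<dots> = ord_word n (pc w0) (dc w0) (vc w0)"
        unfolding ord_word_sw by (intro arg_cong[where f=concat] map_cong) (use e in auto)
      also have "\<dots> = w0" using w0(1) g(2) B_decode(1) by (metis subsetD)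
      finally show False using w(2) by simp
    qed
    then obtain a where a: "a \<in> {1..n}" "P w a \<noteq> P w0 a" by blast
    then have "a \<in> ?S w0 - ?S w" using rel[OF a(1)] by (auto simp: P_def)
    then have "?S w \<subset> ?S w0" using sub by blast
    then have "N w < N w0" unfolding N_def by (rule psubset_card_mono[rotated]) simp
    with kmin[OF w(1)] show False by simp
  qed
  have "(\<Sum>w\<in>supp g. g w * Wv w t0) = g w0 * Wv w0 t0 + (\<Sum>w\<in>supp g - {w0}. g w * Wv w t0)"
    by (rule sum.remove[OF fin w0(1)])
  also have "(\<Sum>w\<in>supp g - {w0}. g w * Wv w t0) = 0"
    using other by (intro sum.neutral) auto
  finally have "g w0 * Wv w0 t0 = 0" using sum0[of t0] by simp
  moreover have "g w0 \<noteq> 0" using w0(1) by (simp add: supp_def)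
  moreover have "Wv w0 t0 \<noteq> 0"
    unfolding Wv_def prodv_def t0_def using loc_self[OF m] bd0 by auto
  ultimately show False by simp
qed

end

theorem theorem5p2:
  fixes q :: "'k::field" and m n :: nat
  assumes char: "(2::'k) \<noteq> 0"
    and q: "q \<noteq> 0"
    and m: "m \<ge> 1"
    and n: "n \<ge> 1"
  shows "(\<forall>f. fin_supp f \<longrightarrow> (\<forall>w\<in>supp f. valid_word n w) \<longrightarrow>
            (\<exists>g. fin_supp g \<and> supp g \<subseteq> cl_basis_words m n \<and>
                 fsub f g \<in> cl_ideal q m n))
       \<and> (\<forall>g. fin_supp g \<longrightarrow> supp g \<subseteq> cl_basis_words m n \<longrightarrow>
            g \<in> cl_ideal q m n \<longrightarrow> g = (\<lambda>_. 0))"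
proof (intro conjI allI impI)
  fix f :: "'k fa"
  assume "fin_supp f" "\<forall>w\<in>supp f. valid_word n w"
  then show "\<exists>g. fin_supp g \<and> supp g \<subseteq> cl_basis_words m n \<and> fsub f g \<in> cl_ideal q m n"
    using spanning[where q=q and m=m and n=n, OF char m] by blast
next
  fix g :: "'k fa"
  assume "fin_supp g" "supp g \<subseteq> cl_basis_words m n" "g \<in> cl_ideal q m n"
  then show "g = (\<lambda>_. 0)"
    using indep[where q=q and m=m and n=n, OF q m] by blast
qed

end
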